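(* Let $\mathcal{G}$ and $\mathcal{H}$ be finite simple hypergraphs such that $V(\mathcal{H})=V(\mathcal{G})\cup\{w_1,\ldots,w_t\}$ with $w_i\notin V(\mathcal{G})$ for all $i$, and $E(\mathcal{H})=E(\mathcal{G})\cup\{\{v,w_1,\ldots,w_t\}\}$ for some vertex $v\in V(\mathcal{G})$. Let $R=K[x_\alpha:\alpha\in V(\mathcal{G})]$ and $R'=K[x_\alpha:\alpha\in V(\mathcal{H})]$. Then for all $s\geq1$, $$\mathrm{Ass}_{R'}(R'/J(\mathcal{H})^s)=\mathrm{Ass}_R(R/J(\mathcal{G})^s)\cup\{(x_v,x_{w_1},\ldots,x_{w_t})\},$$ where monomial primes of $R$ are regarded as monomial primes of $R'$ (generated by the same variables).
   Context: A hypergraph $\mathcal{H}$ on a finite vertex set is a collection of subsets (edges); it is simple if no edge contains another. A vertex cover of $\mathcal H$ is a set of vertices meeting every edge; it is minimal if no proper subset is a vertex cover. The cover ideal is $J(\mathcal{H})=(\prod_{i\in W}x_i : W \text{ a minimal vertex cover of } \mathcal{H})$. $\mathrm{Ass}$ denotes the set of associated primes. *)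

theory Defs
  imports "HOL-Library.Poly_Mapping"
begin

type_synonym ('v, 'k) mpoly = "('v \<Rightarrow>\<^sub>0 nat) \<Rightarrow>\<^sub>0 'k"

text \<open>The polynomial ring K[x_a : a in X], as a subring of all polynomials.\<close>
definition polys_in :: "'v set \<Rightarrow> ('v, 'k::field) mpoly set" where
  "polys_in X = {p :: ('v, 'k) mpoly. \<forall>m \<in> Poly_Mapping.keys p. Poly_Mapping.keys m \<subseteq> X}"

definition var :: "'v \<Rightarrow> ('v, 'k::field) mpoly" where
  "var i = Poly_Mapping.single (Poly_Mapping.single i 1) 1"

definition is_ideal_in :: "('v, 'k::field) mpoly set \<Rightarrow> ('v, 'k) mpoly set \<Rightarrow> bool" where
  "is_ideal_in S I \<longleftrightarrow> I \<subseteq> S \<and> 0 \<in> I \<and> (\<forall>a\<in>I. \<forall>b\<in>I. a + b \<in> I)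
     \<and> (\<forall>r\<in>S. \<forall>a\<in>I. r * a \<in> I)"

definition ideal_gen :: "('v, 'k::field) mpoly set \<Rightarrow> ('v, 'k) mpoly set \<Rightarrow> ('v, 'k) mpoly set" where
  "ideal_gen S G = \<Inter> {I. is_ideal_in S I \<and> G \<subseteq> I}"

fun ideal_pow :: "('v, 'k::field) mpoly set \<Rightarrow> ('v, 'k) mpoly set \<Rightarrow> nat \<Rightarrow> ('v, 'k) mpoly set" where
  "ideal_pow S I 0 = S"
| "ideal_pow S I (Suc n) = ideal_gen S {a * b | a b. a \<in> ideal_pow S I n \<and> b \<in> I}"

definition is_prime_in :: "('v, 'k::field) mpoly set \<Rightarrow> ('v, 'k) mpoly set \<Rightarrow> bool" where
  "is_prime_in S P \<longleftrightarrow> is_ideal_in S P \<and> P \<noteq> S \<and>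
     (\<forall>a\<in>S. \<forall>b\<in>S. a * b \<in> P \<longrightarrow> a \<in> P \<or> b \<in> P)"

definition Ass :: "('v, 'k::field) mpoly set \<Rightarrow> ('v, 'k) mpoly set \<Rightarrow> ('v, 'k) mpoly set set" where
  "Ass S I = {P. is_prime_in S P \<and> (\<exists>g\<in>S. P = {f \<in> S. f * g \<in> I})}"

definition simple_hypergraph :: "'v set \<Rightarrow> 'v set set \<Rightarrow> bool" where
  "simple_hypergraph V E \<longleftrightarrow> finite V \<and> (\<forall>e\<in>E. e \<subseteq> V) \<and>
     (\<forall>e\<in>E. \<forall>f\<in>E. e \<subseteq> f \<longrightarrow> e = f)"

definition vertex_cover :: "'v set \<Rightarrow> 'v set set \<Rightarrow> 'v set \<Rightarrow> bool" where
  "vertex_cover V E W \<longleftrightarrow> W \<subseteq> V \<and> (\<forall>e\<in>E. W \<inter> e \<noteq> {})"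

definition minimal_vertex_cover :: "'v set \<Rightarrow> 'v set set \<Rightarrow> 'v set \<Rightarrow> bool" where
  "minimal_vertex_cover V E W \<longleftrightarrow> vertex_cover V E W \<and> (\<forall>W'. W' \<subset> W \<longrightarrow> \<not> vertex_cover V E W')"

definition cover_ideal :: "'v set \<Rightarrow> 'v set set \<Rightarrow> ('v, 'k::field) mpoly set" where
  "cover_ideal V E = ideal_gen (polys_in V)
     {(\<Prod>i\<in>W. var i) | W. minimal_vertex_cover V E W}"

end

theory Submission
  imports Defs
begin


lemma lookup_mult_single:
  fixes f :: "('v,'k::field) mpoly"
  shows "Poly_Mapping.lookup (f * Poly_Mapping.single \<kappa> c) (\<tau> + \<kappa>) = Poly_Mapping.lookup f \<tau> * c"
proof -
  have 1: "(\<Sum>aa. c when \<kappa> = aa when \<tau> + \<kappa> = a + aa) = (c when a = \<tau>)" for a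
  proof (cases "a = \<tau>")
    case False
    have "(\<Sum>aa. c when \<kappa> = aa when \<tau> + \<kappa> = a + aa) = 0"
    proof -
      have e: "(\<lambda>aa. c when \<kappa> = aa when \<tau> + \<kappa> = a + aa) = (\<lambda>_. 0)"
        using False by (auto simp: fun_eq_iff when_def)
      show ?thesis by (simp only: e Sum_any.neutral)
    qed
    thus ?thesis using False by simp
  qed (simp add: when_when conj_commute)
  show ?thesis
    by (simp add: lookup_mult lookup_single 1 mult_when)
qed

lemma keys_mult_single:
  fixes f :: "('v,'k::field) mpoly"
  shows "Poly_Mapping.keys (f * Poly_Mapping.single \<kappa> 1) = (\<lambda>\<tau>. \<tau> + \<kappa>) ` Poly_Mapping.keys f"
proof
  show "Poly_Mapping.keys (f * Poly_Mapping.single \<kappa> 1) \<subseteq> (\<lambda>\<tau>. \<tau> + \<kappa>) ` Poly_Mapping.keys f"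
    using keys_mult[of f "Poly_Mapping.single \<kappa> (1::'k)"] by auto
  show "(\<lambda>\<tau>. \<tau> + \<kappa>) ` Poly_Mapping.keys f \<subseteq> Poly_Mapping.keys (f * Poly_Mapping.single \<kappa> 1)"
    by (auto simp: in_keys_iff lookup_mult_single)
qed

lemma poly_expand:
  fixes f :: "('a \<Rightarrow>\<^sub>0 'b::comm_monoid_add)"
  shows "f = (\<Sum>\<tau>\<in>Poly_Mapping.keys f. Poly_Mapping.single \<tau> (Poly_Mapping.lookup f \<tau>))"
proof (rule poly_mapping_eqI)
  fix k
  show "Poly_Mapping.lookup f k = Poly_Mapping.lookup (\<Sum>\<tau>\<in>Poly_Mapping.keys f. Poly_Mapping.single \<tau> (Poly_Mapping.lookup f \<tau>)) k"
    by (cases "k \<in> Poly_Mapping.keys f")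
       (auto simp: lookup_sum lookup_single when_def in_keys_iff)
qed

definition prestr :: "('a \<Rightarrow> bool) \<Rightarrow> ('a \<Rightarrow>\<^sub>0 'b::zero) \<Rightarrow> 'a \<Rightarrow>\<^sub>0 'b" where
  "prestr Q f = Abs_poly_mapping (\<lambda>x. if Q x then Poly_Mapping.lookup f x else 0)"

lemma lookup_prestr: "Poly_Mapping.lookup (prestr Q f) x = (if Q x then Poly_Mapping.lookup f x else 0)"
proof -
  have "{x. (if Q x then Poly_Mapping.lookup f x else 0) \<noteq> 0} \<subseteq> {x. Poly_Mapping.lookup f x \<noteq> 0}" by auto
  hence "finite {x. (if Q x then Poly_Mapping.lookup f x else 0) \<noteq> 0}"
    using finite_subset finite_lookup by blast
  thus ?thesis unfolding prestr_def by simp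
qed

lemma keys_prestr: "Poly_Mapping.keys (prestr Q f) = {x \<in> Poly_Mapping.keys f. Q x}"
  by (auto simp: in_keys_iff lookup_prestr split: if_splits)

lemma prestr_add: "prestr Q (f + g) = prestr Q f + prestr Q (g::'a \<Rightarrow>\<^sub>0 'b::monoid_add)"
  by (rule poly_mapping_eqI) (simp add: lookup_prestr lookup_add)

lemma prestr_diff: "prestr Q (f - g) = prestr Q f - prestr Q (g::'a \<Rightarrow>\<^sub>0 'b::ab_group_add)"
  by (rule poly_mapping_eqI) (simp add: lookup_prestr lookup_minus)

lemma prestr_zero[simp]: "prestr Q 0 = 0"
  by (rule poly_mapping_eqI) (simp add: lookup_prestr)

lemma prestr_split: "f = prestr Q f + prestr (\<lambda>x. \<not> Q x) (f::'a \<Rightarrow>\<^sub>0 'b::monoid_add)"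
  by (rule poly_mapping_eqI) (simp add: lookup_prestr lookup_add)

lemma prestr_id: "(\<And>x. x \<in> Poly_Mapping.keys f \<Longrightarrow> Q x) \<Longrightarrow> prestr Q f = f"
  by (rule poly_mapping_eqI) (auto simp: lookup_prestr in_keys_iff)

lemma prestr_null: "(\<And>x. x \<in> Poly_Mapping.keys f \<Longrightarrow> \<not> Q x) \<Longrightarrow> prestr Q f = 0"
  by (rule poly_mapping_eqI) (auto simp: lookup_prestr in_keys_iff)

lemma prestr_prestr: "prestr Q (prestr Q' f) = prestr (\<lambda>x. Q x \<and> Q' x) f"
  by (rule poly_mapping_eqI) (simp add: lookup_prestr)

lemma lookup_minus_nat: "Poly_Mapping.lookup (a - b) i = Poly_Mapping.lookup a i - Poly_Mapping.lookup (b::'a \<Rightarrow>\<^sub>0 nat) i"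
  by (simp add: minus_poly_mapping.rep_eq)



lemma polys_in_iff: "f \<in> polys_in X \<longleftrightarrow> (\<forall>m\<in>Poly_Mapping.keys f. Poly_Mapping.keys m \<subseteq> X)"
  by (simp add: polys_in_def)

lemma keys_add_nat: "Poly_Mapping.keys (a + b) = Poly_Mapping.keys a \<union> Poly_Mapping.keys (b::'a \<Rightarrow>\<^sub>0 nat)"
  by (auto simp: in_keys_iff lookup_add)

lemma polys_add: "f \<in> polys_in X \<Longrightarrow> g \<in> polys_in X \<Longrightarrow> f + g \<in> polys_in X"
  using keys_add[of f g] by (auto simp: polys_in_iff)

lemma polys_mult: "f \<in> polys_in X \<Longrightarrow> g \<in> polys_in X \<Longrightarrow> f * g \<in> polys_in X"
proof -
  assume f: "f \<in> polys_in X" and g: "g \<in> polys_in X"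
  show ?thesis unfolding polys_in_iff
  proof
    fix m assume "m \<in> Poly_Mapping.keys (f * g)"
    then obtain a b where "a \<in> Poly_Mapping.keys f" "b \<in> Poly_Mapping.keys g" "m = a + b"
      using keys_mult[of f g] by blast
    then show "Poly_Mapping.keys m \<subseteq> X" using f g by (auto simp: polys_in_iff keys_add_nat)
  qed
qed

lemma polys_uminus: "f \<in> polys_in X \<Longrightarrow> - f \<in> polys_in X"
  by (simp add: polys_in_iff)

lemma polys_diff: "f \<in> polys_in X \<Longrightarrow> g \<in> polys_in X \<Longrightarrow> f - g \<in> polys_in X"
  using keys_diff[of f g] by (auto simp: polys_in_iff)

lemma polys_zero[simp]: "0 \<in> polys_in X"
  by (simp add: polys_in_iff)

lemma polys_one[simp]: "1 \<in> polys_in X"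
  by (simp add: polys_in_iff)

lemma polys_single: "Poly_Mapping.keys \<kappa> \<subseteq> X \<Longrightarrow> Poly_Mapping.single \<kappa> c \<in> polys_in X"
  by (simp add: polys_in_iff)

lemma polys_single0[simp]: "Poly_Mapping.single 0 c \<in> polys_in X"
  by (simp add: polys_in_iff)

lemma polys_var: "i \<in> X \<Longrightarrow> var i \<in> polys_in X"
  by (simp add: polys_in_iff var_def)

lemma polys_sum: "(\<And>x. x \<in> A \<Longrightarrow> f x \<in> polys_in X) \<Longrightarrow> sum f A \<in> polys_in X"
  by (induction A rule: infinite_finite_induct) (auto intro: polys_add)

lemma polys_prod: "(\<And>x. x \<in> A \<Longrightarrow> f x \<in> polys_in X) \<Longrightarrow> prod f A \<in> polys_in X"
  by (induction A rule: infinite_finite_induct) (auto intro: polys_mult)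

lemma polys_prestr: "f \<in> polys_in X \<Longrightarrow> prestr Q f \<in> polys_in X"
  by (auto simp: polys_in_iff keys_prestr)

lemma polys_mono: "f \<in> polys_in X \<Longrightarrow> X \<subseteq> Y \<Longrightarrow> f \<in> polys_in Y"
  by (auto simp: polys_in_iff)

section \<open>Ideals\<close>

context
  fixes X :: "'v set" and I :: "('v,'k::field) mpoly set"
  assumes idl: "is_ideal_in (polys_in X) I"
begin

lemma id_sub: "a \<in> I \<Longrightarrow> a \<in> polys_in X"
  using idl unfolding is_ideal_in_def by blast

lemma id_zero: "0 \<in> I"
  using idl unfolding is_ideal_in_def by blast

lemma id_add: "a \<in> I \<Longrightarrow> b \<in> I \<Longrightarrow> a + b \<in> I"
  using idl unfolding is_ideal_in_def by blast

lemma id_mult: "r \<in> polys_in X \<Longrightarrow> a \<in> I \<Longrightarrow> r * a \<in> I"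
  using idl unfolding is_ideal_in_def by blast

lemma id_mult2: "r \<in> polys_in X \<Longrightarrow> a \<in> I \<Longrightarrow> a * r \<in> I"
  using id_mult[of r a] by (simp add: mult.commute)

lemma id_uminus: "a \<in> I \<Longrightarrow> - a \<in> I"
proof -
  assume "a \<in> I"
  moreover have "(-1 :: ('v,'k) mpoly) \<in> polys_in X"
    using polys_uminus[OF polys_one[of X]] by simp
  ultimately show ?thesis using id_mult[of "-1" a] by simp
qed

lemma id_diff: "a \<in> I \<Longrightarrow> b \<in> I \<Longrightarrow> a - b \<in> I"
  using id_add[of a "- b"] id_uminus[of b] by simp

lemma id_sum: "(\<And>x. x \<in> A \<Longrightarrow> f x \<in> I) \<Longrightarrow> sum f A \<in> I"
  by (induction A rule: infinite_finite_induct) (auto intro: id_add id_zero)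

lemma id_diff_iff: "a \<in> polys_in X \<Longrightarrow> b \<in> I \<Longrightarrow> a - b \<in> I \<longleftrightarrow> a \<in> I"
  using id_diff[of "a - b" "- b"] id_uminus[of b] id_diff[of a b] by auto

lemma id_add_iff: "a \<in> polys_in X \<Longrightarrow> b \<in> I \<Longrightarrow> a + b \<in> I \<longleftrightarrow> a \<in> I"
  using id_diff[of "a + b" b] id_add[of a b] by auto

end

lemma ideal_gen_ideal:
  assumes "G \<subseteq> polys_in X"
  shows "is_ideal_in (polys_in X) (ideal_gen (polys_in X) G)"
proof -
  have S: "is_ideal_in (polys_in X) (polys_in X)"
    by (auto simp: is_ideal_in_def intro: polys_add polys_mult)
  let ?F = "{I. is_ideal_in (polys_in X) I \<and> G \<subseteq> I}"
  have inF: "polys_in X \<in> ?F" using S assms by auto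
  have "ideal_gen (polys_in X) G = \<Inter>?F" by (simp add: ideal_gen_def)
  moreover have "is_ideal_in (polys_in X) (\<Inter>?F)"
  proof -
    have 1: "\<Inter>?F \<subseteq> polys_in X" using inF by blast
    have 2: "0 \<in> \<Inter>?F" by (auto simp: is_ideal_in_def)
    have 3: "\<forall>a\<in>\<Inter>?F. \<forall>b\<in>\<Inter>?F. a + b \<in> \<Inter>?F" by (auto simp: is_ideal_in_def)
    have 4: "\<forall>r\<in>polys_in X. \<forall>a\<in>\<Inter>?F. r * a \<in> \<Inter>?F" by (auto simp: is_ideal_in_def)
    show ?thesis using 1 2 3 4 unfolding is_ideal_in_def by blast
  qed
  ultimately show ?thesis by simp
qed

lemma ideal_gen_sup: "G \<subseteq> ideal_gen S G"
  unfolding ideal_gen_def by blast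

lemma ideal_gen_least: "is_ideal_in S I \<Longrightarrow> G \<subseteq> I \<Longrightarrow> ideal_gen S G \<subseteq> I"
  unfolding ideal_gen_def by blast

lemma ideal_gen_mono: "G \<subseteq> G' \<Longrightarrow> ideal_gen S G \<subseteq> ideal_gen S G'"
  unfolding ideal_gen_def by blast

section \<open>Monomial ideals\<close>

definition MS :: "'v set \<Rightarrow> (('v \<Rightarrow>\<^sub>0 nat) \<Rightarrow> bool) \<Rightarrow> ('v,'k::field) mpoly set" where
  "MS X M = {f \<in> polys_in X. \<forall>\<tau>\<in>Poly_Mapping.keys f. M \<tau>}"

definition upclosed :: "'v set \<Rightarrow> (('v \<Rightarrow>\<^sub>0 nat) \<Rightarrow> bool) \<Rightarrow> bool" where
  "upclosed X M \<longleftrightarrow> (\<forall>\<mu> \<nu>. M \<mu> \<longrightarrow> Poly_Mapping.keys \<nu> \<subseteq> X \<longrightarrow> M (\<mu> + \<nu>))"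

definition dvdm :: "('v \<Rightarrow>\<^sub>0 nat) \<Rightarrow> ('v \<Rightarrow>\<^sub>0 nat) \<Rightarrow> bool" where
  "dvdm \<beta> \<mu> \<longleftrightarrow> (\<forall>i. Poly_Mapping.lookup \<beta> i \<le> Poly_Mapping.lookup \<mu> i)"

lemma dvdm_split: "dvdm \<beta> \<mu> \<Longrightarrow> \<mu> = \<beta> + (\<mu> - \<beta>)"
  by (rule poly_mapping_eqI) (auto simp: dvdm_def lookup_add lookup_minus_nat)

lemma keys_minus_nat: "Poly_Mapping.keys (\<mu> - \<beta>) \<subseteq> Poly_Mapping.keys (\<mu>::'v \<Rightarrow>\<^sub>0 nat)"
  by (auto simp: in_keys_iff lookup_minus_nat)

lemma MS_ideal: "upclosed X M \<Longrightarrow> is_ideal_in (polys_in X) (MS X (M::('v \<Rightarrow>\<^sub>0 nat) \<Rightarrow> bool) :: ('v,'k::field) mpoly set)"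
  unfolding is_ideal_in_def
proof (intro conjI ballI)
  assume up: "upclosed X M"
  show "MS X M \<subseteq> polys_in X" by (auto simp: MS_def)
  show "(0::('v,'k) mpoly) \<in> MS X M" by (simp add: MS_def)
  fix a b :: "('v,'k) mpoly"
  assume "a \<in> MS X M" "b \<in> MS X M"
  then show "a + b \<in> MS X M"
    using keys_add[of a b] by (auto simp: MS_def intro: polys_add)
next
  assume up: "upclosed X M"
  fix r a :: "('v,'k) mpoly"
  assume r: "r \<in> polys_in X" and a: "a \<in> MS X M"
  have "M \<tau>" if tk: "\<tau> \<in> Poly_Mapping.keys (r * a)" for \<tau>
  proof -
    obtain x y where "x \<in> Poly_Mapping.keys r" "y \<in> Poly_Mapping.keys a" "\<tau> = x + y"
      using keys_mult[of r a] tk by blast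
    moreover have "M y" using a \<open>y \<in> Poly_Mapping.keys a\<close> by (simp add: MS_def)
    moreover have "Poly_Mapping.keys x \<subseteq> X" using r \<open>x \<in> Poly_Mapping.keys r\<close> by (simp add: polys_in_iff)
    ultimately have "M (y + x)" using up unfolding upclosed_def by blast
    then show ?thesis using \<open>\<tau> = x + y\<close> by (simp add: add.commute)
  qed
  then show "r * a \<in> MS X M" using r a by (auto simp: MS_def intro: polys_mult)
qed

lemma MS_restr: "f \<in> MS X M \<Longrightarrow> prestr Q f \<in> MS X M"
  by (auto simp: MS_def keys_prestr intro: polys_prestr)

lemma single_mult_split:
  "dvdm \<beta> \<tau> \<Longrightarrow> Poly_Mapping.single \<tau> c =
     (Poly_Mapping.single 0 c * Poly_Mapping.single (\<tau> - \<beta>) 1) * (Poly_Mapping.single \<beta> (1::'k::field))"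
proof -
  assume d: "dvdm \<beta> \<tau>"
  have "\<tau> - \<beta> + \<beta> = \<tau>" using dvdm_split[OF d] by (simp add: add.commute)
  then show ?thesis by (simp add: mult_single)
qed

lemma G1:
  assumes B: "\<And>\<beta>. \<beta> \<in> B \<Longrightarrow> Poly_Mapping.keys \<beta> \<subseteq> X"
  shows "ideal_gen (polys_in X) ((\<lambda>\<beta>. Poly_Mapping.single \<beta> 1) ` B)
       = (MS X (\<lambda>\<mu>. Poly_Mapping.keys \<mu> \<subseteq> X \<and> (\<exists>\<beta>\<in>B. dvdm \<beta> \<mu>)) :: ('v,'k::field) mpoly set)"
proof
  let ?M = "\<lambda>\<mu>. Poly_Mapping.keys \<mu> \<subseteq> X \<and> (\<exists>\<beta>\<in>B. dvdm \<beta> \<mu>)"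
  have up: "upclosed X ?M"
    unfolding upclosed_def dvdm_def
  proof (intro allI impI)
    fix \<mu> \<nu> :: "'v \<Rightarrow>\<^sub>0 nat"
    assume a: "Poly_Mapping.keys \<mu> \<subseteq> X \<and> (\<exists>\<beta>\<in>B. \<forall>i. Poly_Mapping.lookup \<beta> i \<le> Poly_Mapping.lookup \<mu> i)"
      and n: "Poly_Mapping.keys \<nu> \<subseteq> X"
    then obtain \<beta> where "\<beta> \<in> B" "\<forall>i. Poly_Mapping.lookup \<beta> i \<le> Poly_Mapping.lookup \<mu> i" by blast
    then show "Poly_Mapping.keys (\<mu> + \<nu>) \<subseteq> X \<and> (\<exists>\<beta>\<in>B. \<forall>i. Poly_Mapping.lookup \<beta> i \<le> Poly_Mapping.lookup (\<mu> + \<nu>) i)"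
      using a n by (auto simp: keys_add_nat lookup_add intro: trans_le_add1)
  qed
  have gsub: "(\<lambda>\<beta>. Poly_Mapping.single \<beta> (1::'k)) ` B \<subseteq> polys_in X"
  proof (rule subsetI)
    fix p assume "p \<in> (\<lambda>\<beta>. Poly_Mapping.single \<beta> (1::'k)) ` B"
    then obtain \<beta> where b: "\<beta> \<in> B" "p = Poly_Mapping.single \<beta> 1" by blast
    then show "p \<in> polys_in X" using B[OF b(1)] by (simp add: polys_single)
  qed
  note GI = ideal_gen_ideal[OF gsub]
  show "ideal_gen (polys_in X) ((\<lambda>\<beta>. Poly_Mapping.single \<beta> 1) ` B) \<subseteq> (MS X ?M :: ('v,'k) mpoly set)"
  proof (rule ideal_gen_least[OF MS_ideal[OF up]], rule subsetI)
    fix p assume "p \<in> (\<lambda>\<beta>. Poly_Mapping.single \<beta> (1::'k)) ` B"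
    then obtain \<beta> where b: "\<beta> \<in> B" "p = Poly_Mapping.single \<beta> 1" by blast
    have d: "dvdm \<beta> \<beta>" by (simp add: dvdm_def)
    have ex: "\<exists>\<beta>'\<in>B. dvdm \<beta>' \<beta>" using d b(1) by (rule bexI[where x=\<beta>])
    show "p \<in> MS X ?M" using b B[OF b(1)] ex by (simp add: MS_def polys_single)
  qed
  show "(MS X ?M :: ('v,'k) mpoly set) \<subseteq> ideal_gen (polys_in X) ((\<lambda>\<beta>. Poly_Mapping.single \<beta> 1) ` B)"
  proof (rule subsetI)
    fix f :: "('v,'k) mpoly" assume f: "f \<in> MS X ?M"
    have T: "Poly_Mapping.single \<tau> (Poly_Mapping.lookup f \<tau>) \<in> ideal_gen (polys_in X) ((\<lambda>\<beta>. Poly_Mapping.single \<beta> 1) ` B)"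
      if tk: "\<tau> \<in> Poly_Mapping.keys f" for \<tau>
    proof -
      from f have "f \<in> polys_in X \<and> (\<forall>\<tau>\<in>Poly_Mapping.keys f. ?M \<tau>)" unfolding MS_def by (rule CollectD)
      hence "?M \<tau>" using tk by blast
      then obtain \<beta> where b: "\<beta> \<in> B" "dvdm \<beta> \<tau>" and tX: "Poly_Mapping.keys \<tau> \<subseteq> X"
        by blast
      have k: "Poly_Mapping.keys (\<tau> - \<beta>) \<subseteq> X" by (rule subset_trans[OF keys_minus_nat tX])
      have r: "Poly_Mapping.single 0 (Poly_Mapping.lookup f \<tau>) * Poly_Mapping.single (\<tau> - \<beta>) 1 \<in> polys_in X"
        by (rule polys_mult[OF polys_single0 polys_single[OF k]])
      have g: "Poly_Mapping.single \<beta> 1 \<in> ideal_gen (polys_in X) ((\<lambda>\<beta>. Poly_Mapping.single \<beta> (1::'k)) ` B)"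
        using ideal_gen_sup imageI[OF b(1), of "\<lambda>\<beta>. Poly_Mapping.single \<beta> (1::'k)"] by (rule subsetD)
      have "Poly_Mapping.single \<tau> (Poly_Mapping.lookup f \<tau>) =
         (Poly_Mapping.single 0 (Poly_Mapping.lookup f \<tau>) * Poly_Mapping.single (\<tau> - \<beta>) 1) * (Poly_Mapping.single \<beta> 1)"
        by (rule single_mult_split[OF b(2)])
      also have "\<dots> \<in> ideal_gen (polys_in X) ((\<lambda>\<beta>. Poly_Mapping.single \<beta> 1) ` B)"
        by (rule id_mult[OF GI r g])
      finally show ?thesis .
    qed
    have s: "(\<Sum>\<tau>\<in>Poly_Mapping.keys f. Poly_Mapping.single \<tau> (Poly_Mapping.lookup f \<tau>)) \<in> ideal_gen (polys_in X) ((\<lambda>\<beta>. Poly_Mapping.single \<beta> 1) ` B)"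
      by (rule id_sum[OF GI T])
    have e: "f = (\<Sum>\<tau>\<in>Poly_Mapping.keys f. Poly_Mapping.single \<tau> (Poly_Mapping.lookup f \<tau>))"
      by (rule poly_expand)
    show "f \<in> ideal_gen (polys_in X) ((\<lambda>\<beta>. Poly_Mapping.single \<beta> 1) ` B)"
      by (subst e) (rule s)
  qed
qed



lemma MS_iff: "f \<in> MS X M \<longleftrightarrow> f \<in> polys_in X \<and> (\<forall>\<tau>\<in>Poly_Mapping.keys f. M \<tau>)"
  unfolding MS_def by (rule mem_Collect_eq)

lemma G2:
  assumes K1: "\<And>\<mu>. M1 \<mu> \<Longrightarrow> Poly_Mapping.keys \<mu> \<subseteq> X"
    and K2: "\<And>\<mu>. M2 \<mu> \<Longrightarrow> Poly_Mapping.keys \<mu> \<subseteq> X"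
    and U1: "upclosed X M1" and U2: "upclosed X M2"
  shows "ideal_gen (polys_in X) {a * b | a b. a \<in> MS X M1 \<and> b \<in> MS X M2}
       = (MS X (\<lambda>\<mu>. Poly_Mapping.keys \<mu> \<subseteq> X \<and> (\<exists>\<beta>\<in>{\<mu>1 + \<mu>2 | \<mu>1 \<mu>2. M1 \<mu>1 \<and> M2 \<mu>2}. dvdm \<beta> \<mu>)) :: ('v,'k::field) mpoly set)"
proof -
  define B where "B = {\<mu>1 + \<mu>2 | \<mu>1 \<mu>2. M1 \<mu>1 \<and> M2 \<mu>2}"
  define P where "P = {a * b | a b. a \<in> (MS X M1 :: ('v,'k) mpoly set) \<and> b \<in> MS X M2}"
  have BX: "Poly_Mapping.keys \<beta> \<subseteq> X" if "\<beta> \<in> B" for \<beta>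
  proof -
    from that obtain \<mu>1 \<mu>2 where "\<beta> = \<mu>1 + \<mu>2" "M1 \<mu>1" "M2 \<mu>2" unfolding B_def by blast
    then show ?thesis using K1 K2 by (simp add: keys_add_nat)
  qed
  have g1: "ideal_gen (polys_in X) ((\<lambda>\<beta>. Poly_Mapping.single \<beta> 1) ` B)
       = (MS X (\<lambda>\<mu>. Poly_Mapping.keys \<mu> \<subseteq> X \<and> (\<exists>\<beta>\<in>B. dvdm \<beta> \<mu>)) :: ('v,'k) mpoly set)"
    by (rule G1[OF BX])
  have gsub: "(\<lambda>\<beta>. Poly_Mapping.single \<beta> (1::'k)) ` B \<subseteq> polys_in X"
  proof
    fix p assume "p \<in> (\<lambda>\<beta>. Poly_Mapping.single \<beta> (1::'k)) ` B"
    then obtain \<beta> where "\<beta> \<in> B" "p = Poly_Mapping.single \<beta> 1" by blast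
    then show "p \<in> polys_in X" using BX[of \<beta>] by (simp add: polys_single)
  qed
  have Psub: "P \<subseteq> polys_in X"
  proof
    fix p assume "p \<in> P"
    then obtain a b where "p = a * b" "a \<in> MS X M1" "b \<in> MS X M2" unfolding P_def by blast
    then show "p \<in> polys_in X" by (simp add: MS_iff polys_mult)
  qed
  have "ideal_gen (polys_in X) P \<subseteq> ideal_gen (polys_in X) ((\<lambda>\<beta>. Poly_Mapping.single \<beta> (1::'k)) ` B)"
  proof (rule ideal_gen_least[OF ideal_gen_ideal[OF gsub]], rule subsetI)
    fix p assume "p \<in> P"
    then obtain a b where ab: "p = a * b" "a \<in> MS X M1" "b \<in> MS X M2" unfolding P_def by blast
    have "p \<in> MS X (\<lambda>\<mu>. Poly_Mapping.keys \<mu> \<subseteq> X \<and> (\<exists>\<beta>\<in>B. dvdm \<beta> \<mu>))"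
      unfolding MS_iff
    proof
      show "p \<in> polys_in X" using \<open>p \<in> P\<close> Psub by blast
      show "\<forall>\<tau>\<in>Poly_Mapping.keys p. Poly_Mapping.keys \<tau> \<subseteq> X \<and> (\<exists>\<beta>\<in>B. dvdm \<beta> \<tau>)"
      proof
        fix \<tau> assume "\<tau> \<in> Poly_Mapping.keys p"
        then obtain x y where xy: "x \<in> Poly_Mapping.keys a" "y \<in> Poly_Mapping.keys b" "\<tau> = x + y"
          using keys_mult[of a b] ab(1) by blast
        have "M1 x" using ab(2) xy(1) by (simp add: MS_iff)
        moreover have "M2 y" using ab(3) xy(2) by (simp add: MS_iff)
        ultimately have "\<tau> \<in> B" unfolding B_def using xy(3) by blast
        moreover have "dvdm \<tau> \<tau>" by (simp add: dvdm_def)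
        ultimately show "Poly_Mapping.keys \<tau> \<subseteq> X \<and> (\<exists>\<beta>\<in>B. dvdm \<beta> \<tau>)"
          using BX by blast
      qed
    qed
    then show "p \<in> ideal_gen (polys_in X) ((\<lambda>\<beta>. Poly_Mapping.single \<beta> 1) ` B)" using g1 by simp
  qed
  moreover have "ideal_gen (polys_in X) ((\<lambda>\<beta>. Poly_Mapping.single \<beta> (1::'k)) ` B) \<subseteq> ideal_gen (polys_in X) P"
  proof (rule ideal_gen_least[OF ideal_gen_ideal[OF Psub]], rule subsetI)
    fix p assume "p \<in> (\<lambda>\<beta>. Poly_Mapping.single \<beta> (1::'k)) ` B"
    then obtain \<mu>1 \<mu>2 where m: "p = Poly_Mapping.single (\<mu>1 + \<mu>2) 1" "M1 \<mu>1" "M2 \<mu>2"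
      unfolding B_def by blast
    have "Poly_Mapping.single \<mu>1 (1::'k) \<in> MS X M1"
      using m(2) K1[OF m(2)] by (simp add: MS_iff polys_single)
    moreover have "Poly_Mapping.single \<mu>2 (1::'k) \<in> MS X M2"
      using m(3) K2[OF m(3)] by (simp add: MS_iff polys_single)
    moreover have "p = Poly_Mapping.single \<mu>1 1 * Poly_Mapping.single \<mu>2 1"
      using m(1) by (simp add: mult_single)
    ultimately have "p \<in> P" unfolding P_def by blast
    then show "p \<in> ideal_gen (polys_in X) P" using ideal_gen_sup by blast
  qed
  ultimately have "ideal_gen (polys_in X) P = ideal_gen (polys_in X) ((\<lambda>\<beta>. Poly_Mapping.single \<beta> (1::'k)) ` B)"
    by (rule subset_antisym)
  then have "ideal_gen (polys_in X) P = (MS X (\<lambda>\<mu>. Poly_Mapping.keys \<mu> \<subseteq> X \<and> (\<exists>\<beta>\<in>B. dvdm \<beta> \<mu>)) :: ('v,'k) mpoly set)"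
    using g1 by (rule trans)
  then show ?thesis unfolding P_def B_def .
qed



definition cnt :: "(nat \<Rightarrow> 'v set) \<Rightarrow> nat \<Rightarrow> 'v \<Rightarrow> nat" where
  "cnt C n i = card {k. k < n \<and> i \<in> C k}"

lemma cnt_0[simp]: "cnt C 0 i = 0"
  by (simp add: cnt_def)

lemma cnt_Suc: "cnt C (Suc n) i = cnt C n i + (if i \<in> C n then 1 else 0)"
proof -
  have "{k. k < Suc n \<and> i \<in> C k} = {k. k < n \<and> i \<in> C k} \<union> (if i \<in> C n then {n} else {})"
    by (auto simp: less_Suc_eq)
  moreover have "finite {k. k < n \<and> i \<in> C k}" by simp
  moreover have "n \<notin> {k. k < n \<and> i \<in> C k}" by simp
  ultimately show ?thesis unfolding cnt_def by simp
qed

lemma cnt_le: "cnt C n i \<le> n"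
proof -
  have "card {k. k < n \<and> i \<in> C k} \<le> card {..<n}" by (rule card_mono) auto
  then show ?thesis by (simp add: cnt_def)
qed

lemma cnt_upd: "cnt (C(n := D)) n i = cnt C n i"
  unfolding cnt_def by (rule arg_cong[where f=card]) auto

lemma cnt_cong: "(\<And>k. k < n \<Longrightarrow> C k = D k) \<Longrightarrow> cnt C n i = cnt D n i"
  unfolding cnt_def by (rule arg_cong[where f=card]) auto

definition covpow :: "'v set \<Rightarrow> 'v set set \<Rightarrow> nat \<Rightarrow> ('v \<Rightarrow> nat) \<Rightarrow> bool" where
  "covpow X E n m \<longleftrightarrow> (\<exists>C. (\<forall>k<n. vertex_cover X E (C k)) \<and> (\<forall>i. cnt C n i \<le> m i))"

lemma covpow_mono: "covpow X E n m \<Longrightarrow> (\<And>i. m i \<le> m' i) \<Longrightarrow> covpow X E n m'"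
proof -
  assume a: "covpow X E n m" and b: "\<And>i. m i \<le> m' i"
  from a obtain C where C: "\<forall>k<n. vertex_cover X E (C k)" "\<forall>i. cnt C n i \<le> m i"
    unfolding covpow_def by blast
  have "\<forall>i. cnt C n i \<le> m' i"
  proof
    fix i show "cnt C n i \<le> m' i" using C(2)[rule_format, of i] b[of i] by linarith
  qed
  then show ?thesis unfolding covpow_def using C(1) by blast
qed

lemma covpow_0[simp]: "covpow X E 0 m"
  unfolding covpow_def by simp

definition CP :: "'v set \<Rightarrow> 'v set set \<Rightarrow> nat \<Rightarrow> ('v \<Rightarrow>\<^sub>0 nat) \<Rightarrow> bool" where
  "CP X E n \<mu> \<longleftrightarrow> Poly_Mapping.keys \<mu> \<subseteq> X \<and> covpow X E n (Poly_Mapping.lookup \<mu>)"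

definition ind :: "'v set \<Rightarrow> 'v \<Rightarrow>\<^sub>0 nat" where
  "ind W = (\<Sum>i\<in>W. Poly_Mapping.single i 1)"

lemma lookup_ind: "finite W \<Longrightarrow> Poly_Mapping.lookup (ind W) j = (if j \<in> W then 1 else 0)"
  unfolding ind_def by (simp add: lookup_sum lookup_single when_def)

lemma keys_ind: "finite W \<Longrightarrow> Poly_Mapping.keys (ind W) = W"
  by (auto simp: in_keys_iff lookup_ind split: if_splits)

lemma prod_var: "finite W \<Longrightarrow> (\<Prod>i\<in>W. var i) = (Poly_Mapping.single (ind W) 1 :: ('v,'k::field) mpoly)"
proof (induction W rule: finite_induct)
  case empty
  then show ?case by (simp add: ind_def)
next
  case (insert x F)
  then show ?case by (simp add: ind_def var_def mult_single)
qed

lemma CP_upclosed: "upclosed X (CP X E n :: ('v \<Rightarrow>\<^sub>0 nat) \<Rightarrow> bool)"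
  unfolding upclosed_def CP_def
proof (intro allI impI conjI)
  fix \<mu> \<nu> :: "'v \<Rightarrow>\<^sub>0 nat"
  assume a: "Poly_Mapping.keys \<mu> \<subseteq> X \<and> covpow X E n (Poly_Mapping.lookup \<mu>)" and b: "Poly_Mapping.keys \<nu> \<subseteq> X"
  show "Poly_Mapping.keys (\<mu> + \<nu>) \<subseteq> X" using a b by (simp add: keys_add_nat)
  show "covpow X E n (Poly_Mapping.lookup (\<mu> + \<nu>))"
    using a covpow_mono[of X E n "Poly_Mapping.lookup \<mu>" "Poly_Mapping.lookup (\<mu> + \<nu>)"]
    by (simp add: lookup_add)
qed

lemma CP_keys: "CP X E n \<mu> \<Longrightarrow> Poly_Mapping.keys \<mu> \<subseteq> X"
  by (simp add: CP_def)

lemma vc_sub: "vertex_cover X E C \<Longrightarrow> C \<subseteq> X"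
  by (simp add: vertex_cover_def)

lemma CP_Suc:
  assumes fin: "finite X"
  shows "CP X E (Suc n) \<mu> \<longleftrightarrow> Poly_Mapping.keys \<mu> \<subseteq> X \<and>
     (\<exists>\<beta>\<in>{\<mu>1 + \<mu>2 | \<mu>1 \<mu>2. CP X E n \<mu>1 \<and> CP X E 1 \<mu>2}. dvdm \<beta> \<mu>)"
proof
  assume a: "CP X E (Suc n) \<mu>"
  then have kX: "Poly_Mapping.keys \<mu> \<subseteq> X" by (simp add: CP_def)
  from a obtain C where C: "\<forall>k<Suc n. vertex_cover X E (C k)" "\<forall>i. cnt C (Suc n) i \<le> Poly_Mapping.lookup \<mu> i"
    unfolding CP_def covpow_def by blast
  have Cn: "vertex_cover X E (C n)" using C(1) by simp
  have finC: "finite (C n)" using vc_sub[OF Cn] fin finite_subset by blast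
  define \<mu>2 where "\<mu>2 = ind (C n)"
  define \<mu>1 where "\<mu>1 = \<mu> - \<mu>2"
  have l2: "Poly_Mapping.lookup \<mu>2 i = (if i \<in> C n then 1 else 0)" for i
    unfolding \<mu>2_def by (rule lookup_ind[OF finC])
  have ge: "Poly_Mapping.lookup \<mu>2 i \<le> Poly_Mapping.lookup \<mu> i" for i
    using C(2)[rule_format, of i] unfolding cnt_Suc l2 by simp
  have sum: "\<mu>1 + \<mu>2 = \<mu>"
    by (rule poly_mapping_eqI) (simp add: \<mu>1_def lookup_add lookup_minus_nat ge)
  have k1: "Poly_Mapping.keys \<mu>1 \<subseteq> X" unfolding \<mu>1_def by (rule subset_trans[OF keys_minus_nat kX])
  have k2: "Poly_Mapping.keys \<mu>2 \<subseteq> X" unfolding \<mu>2_def using keys_ind[OF finC] vc_sub[OF Cn] by simp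
  have "CP X E n \<mu>1"
    unfolding CP_def covpow_def
  proof (intro conjI exI[of _ C])
    show "Poly_Mapping.keys \<mu>1 \<subseteq> X" by (rule k1)
    show "\<forall>k<n. vertex_cover X E (C k)" using C(1) by simp
    show "\<forall>i. cnt C n i \<le> Poly_Mapping.lookup \<mu>1 i"
    proof
      fix i show "cnt C n i \<le> Poly_Mapping.lookup \<mu>1 i"
        using C(2)[rule_format, of i] unfolding cnt_Suc \<mu>1_def lookup_minus_nat l2 by simp
    qed
  qed
  moreover have "CP X E 1 \<mu>2"
    unfolding CP_def covpow_def
  proof (intro conjI exI[of _ "\<lambda>_. C n"])
    show "Poly_Mapping.keys \<mu>2 \<subseteq> X" by (rule k2)
    show "\<forall>k<1. vertex_cover X E ((\<lambda>_. C n) k)" using Cn by simp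
    show "\<forall>i. cnt (\<lambda>_. C n) 1 i \<le> Poly_Mapping.lookup \<mu>2 i"
      by (simp add: cnt_Suc[where n=0, simplified] l2)
  qed
  ultimately have "\<mu>1 + \<mu>2 \<in> {\<mu>1 + \<mu>2 | \<mu>1 \<mu>2. CP X E n \<mu>1 \<and> CP X E 1 \<mu>2}"
    by blast
  moreover have "dvdm (\<mu>1 + \<mu>2) \<mu>" using sum by (simp add: dvdm_def)
  ultimately show "Poly_Mapping.keys \<mu> \<subseteq> X \<and>
     (\<exists>\<beta>\<in>{\<mu>1 + \<mu>2 | \<mu>1 \<mu>2. CP X E n \<mu>1 \<and> CP X E 1 \<mu>2}. dvdm \<beta> \<mu>)"
    using kX by (intro conjI bexI)
next
  assume a: "Poly_Mapping.keys \<mu> \<subseteq> X \<and>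
     (\<exists>\<beta>\<in>{\<mu>1 + \<mu>2 | \<mu>1 \<mu>2. CP X E n \<mu>1 \<and> CP X E 1 \<mu>2}. dvdm \<beta> \<mu>)"
  then obtain \<mu>1 \<mu>2 where m: "CP X E n \<mu>1" "CP X E 1 \<mu>2" "dvdm (\<mu>1 + \<mu>2) \<mu>" by blast
  from m(1) obtain C where C: "\<forall>k<n. vertex_cover X E (C k)" "\<forall>i. cnt C n i \<le> Poly_Mapping.lookup \<mu>1 i"
    unfolding CP_def covpow_def by blast
  from m(2) obtain D where D: "\<forall>k<1. vertex_cover X E (D k)" "\<forall>i. cnt D 1 i \<le> Poly_Mapping.lookup \<mu>2 i"
    unfolding CP_def covpow_def by blast
  have "covpow X E (Suc n) (Poly_Mapping.lookup \<mu>)"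
    unfolding covpow_def
  proof (intro exI[of _ "C(n := D 0)"] conjI allI impI)
    fix k assume "k < Suc n"
    then show "vertex_cover X E ((C(n := D 0)) k)" using C(1) D(1) by (cases "k = n") auto
  next
    fix i
    have "cnt (C(n := D 0)) (Suc n) i = cnt C n i + (if i \<in> D 0 then 1 else 0)"
      by (simp add: cnt_Suc cnt_upd)
    also have "\<dots> \<le> Poly_Mapping.lookup \<mu>1 i + Poly_Mapping.lookup \<mu>2 i"
      using C(2)[rule_format, of i] D(2)[rule_format, of i] by (simp add: cnt_Suc[where n=0, simplified])
    also have "\<dots> \<le> Poly_Mapping.lookup \<mu> i"
      using m(3) by (simp add: dvdm_def lookup_add)
    finally show "cnt (C(n := D 0)) (Suc n) i \<le> Poly_Mapping.lookup \<mu> i" .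
  qed
  then show "CP X E (Suc n) \<mu>" using a by (simp add: CP_def)
qed



lemma MS_cong: "(\<And>\<mu>. Poly_Mapping.keys \<mu> \<subseteq> X \<Longrightarrow> M \<mu> \<longleftrightarrow> M' \<mu>) \<Longrightarrow> (MS X M :: ('v,'k::field) mpoly set) = MS X M'"
  unfolding MS_def polys_in_def by blast

lemma ex_min_cover:
  assumes fin: "finite X"
  shows "vertex_cover X E C \<Longrightarrow> \<exists>W\<subseteq>C. minimal_vertex_cover X E W"
proof (induction "card C" arbitrary: C rule: less_induct)
  case less
  show ?case
  proof (cases "minimal_vertex_cover X E C")
    case True
    then show ?thesis by blast
  next
    case False
    then obtain W' where W': "W' \<subset> C" "vertex_cover X E W'"
      using less.prems unfolding minimal_vertex_cover_def by blast
    have finC: "finite C" using vc_sub[OF less.prems] fin finite_subset by blast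
    have "card W' < card C" by (rule psubset_card_mono[OF finC W'(1)])
    from less.hyps[OF this W'(2)] obtain W where "W \<subseteq> W'" "minimal_vertex_cover X E W" by blast
    then show ?thesis using W'(1) by blast
  qed
qed

lemma cnt_1: "cnt C 1 i = (if i \<in> C 0 then 1 else 0)"
  using cnt_Suc[of C 0 i] by simp

lemma cover_ideal_MS:
  assumes fin: "finite X"
  shows "(cover_ideal X E :: ('v,'k::field) mpoly set) = MS X (CP X E 1)"
proof -
  let ?B = "{ind W | W. minimal_vertex_cover X E W}"
  have gen: "{(\<Prod>i\<in>W. var i) | W. minimal_vertex_cover X E W} = (\<lambda>\<beta>. Poly_Mapping.single \<beta> (1::'k)) ` ?B"
  proof (rule set_eqI)
    fix p :: "('v,'k) mpoly"
    have fW: "minimal_vertex_cover X E W \<Longrightarrow> finite W" for W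
      unfolding minimal_vertex_cover_def vertex_cover_def using finite_subset[OF _ fin] by blast
    show "p \<in> {(\<Prod>i\<in>W. var i) | W. minimal_vertex_cover X E W} \<longleftrightarrow> p \<in> (\<lambda>\<beta>. Poly_Mapping.single \<beta> (1::'k)) ` ?B"
    proof
      assume "p \<in> {(\<Prod>i\<in>W. var i) | W. minimal_vertex_cover X E W}"
      then obtain W where "p = (\<Prod>i\<in>W. var i)" "minimal_vertex_cover X E W" by blast
      then show "p \<in> (\<lambda>\<beta>. Poly_Mapping.single \<beta> (1::'k)) ` ?B"
        using prod_var[OF fW] by blast
    next
      assume "p \<in> (\<lambda>\<beta>. Poly_Mapping.single \<beta> (1::'k)) ` ?B"
      then obtain W where W: "p = Poly_Mapping.single (ind W) 1" "minimal_vertex_cover X E W" by blast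
      have "p = (\<Prod>i\<in>W. var i)" by (rule trans[OF W(1) sym[OF prod_var[OF fW[OF W(2)]]]])
      then show "p \<in> {(\<Prod>i\<in>W. var i) | W. minimal_vertex_cover X E W}"
        using W(2) by blast
    qed
  qed
  have BX: "Poly_Mapping.keys \<beta> \<subseteq> X" if "\<beta> \<in> ?B" for \<beta>
  proof -
    from that obtain W where W: "\<beta> = ind W" "minimal_vertex_cover X E W" by blast
    have "W \<subseteq> X" using W(2) vc_sub unfolding minimal_vertex_cover_def by blast
    then show ?thesis using W(1) keys_ind fin finite_subset by metis
  qed
  have "(cover_ideal X E :: ('v,'k) mpoly set) = ideal_gen (polys_in X) ((\<lambda>\<beta>. Poly_Mapping.single \<beta> (1::'k)) ` ?B)"
    unfolding cover_ideal_def gen ..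
  also have "\<dots> = MS X (\<lambda>\<mu>. Poly_Mapping.keys \<mu> \<subseteq> X \<and> (\<exists>\<beta>\<in>?B. dvdm \<beta> \<mu>))"
    by (rule G1[OF BX])
  also have "\<dots> = MS X (CP X E 1)"
  proof (rule MS_cong)
    fix \<mu> :: "'v \<Rightarrow>\<^sub>0 nat" assume kX: "Poly_Mapping.keys \<mu> \<subseteq> X"
    show "(Poly_Mapping.keys \<mu> \<subseteq> X \<and> (\<exists>\<beta>\<in>?B. dvdm \<beta> \<mu>)) \<longleftrightarrow> CP X E 1 \<mu>"
    proof
      assume "Poly_Mapping.keys \<mu> \<subseteq> X \<and> (\<exists>\<beta>\<in>?B. dvdm \<beta> \<mu>)"
      then obtain W where W: "minimal_vertex_cover X E W" "dvdm (ind W) \<mu>" by blast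
      have fW: "finite W" using W(1) unfolding minimal_vertex_cover_def vertex_cover_def using finite_subset[OF _ fin] by blast
      have "covpow X E 1 (Poly_Mapping.lookup \<mu>)"
        unfolding covpow_def
      proof (intro exI[of _ "\<lambda>_. W"] conjI allI impI)
        show "vertex_cover X E W" using W(1) unfolding minimal_vertex_cover_def by blast
        fix i
        show "cnt (\<lambda>_. W) 1 i \<le> Poly_Mapping.lookup \<mu> i"
          using W(2) unfolding dvdm_def cnt_1 by (simp add: lookup_ind[OF fW])
      qed
      then show "CP X E 1 \<mu>" using kX by (simp add: CP_def)
    next
      assume "CP X E 1 \<mu>"
      then obtain C where C: "vertex_cover X E (C 0)" "\<forall>i. cnt C 1 i \<le> Poly_Mapping.lookup \<mu> i"
        unfolding CP_def covpow_def by auto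
      obtain W where W: "W \<subseteq> C 0" "minimal_vertex_cover X E W" using ex_min_cover[OF fin C(1)] by blast
      have fW: "finite W" using W(2) unfolding minimal_vertex_cover_def vertex_cover_def using finite_subset[OF _ fin] by blast
      have "dvdm (ind W) \<mu>"
        unfolding dvdm_def
      proof
        fix i show "Poly_Mapping.lookup (ind W) i \<le> Poly_Mapping.lookup \<mu> i"
          using C(2)[rule_format, of i] W(1) unfolding cnt_1 by (auto simp: lookup_ind[OF fW] split: if_splits)
      qed
      then show "Poly_Mapping.keys \<mu> \<subseteq> X \<and> (\<exists>\<beta>\<in>?B. dvdm \<beta> \<mu>)" using kX W(2) by blast
    qed
  qed
  finally show ?thesis .
qed

lemma pow_cover:
  assumes fin: "finite X"
  shows "ideal_pow (polys_in X) (cover_ideal X E :: ('v,'k::field) mpoly set) n = MS X (CP X E n)"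
proof (induction n)
  case 0
  show ?case by (rule set_eqI) (simp add: MS_iff CP_def polys_in_iff)
next
  case (Suc n)
  have "ideal_pow (polys_in X) (cover_ideal X E :: ('v,'k) mpoly set) (Suc n)
      = ideal_gen (polys_in X) {a * b | a b. a \<in> (MS X (CP X E n) :: ('v,'k) mpoly set) \<and> b \<in> MS X (CP X E 1)}"
    by (simp only: ideal_pow.simps Suc.IH) (simp only: cover_ideal_MS[OF fin])
  also have "\<dots> = MS X (\<lambda>\<mu>. Poly_Mapping.keys \<mu> \<subseteq> X \<and> (\<exists>\<beta>\<in>{\<mu>1 + \<mu>2 | \<mu>1 \<mu>2. CP X E n \<mu>1 \<and> CP X E 1 \<mu>2}. dvdm \<beta> \<mu>))"
    by (rule G2[OF CP_keys CP_keys CP_upclosed CP_upclosed])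
  also have "\<dots> = MS X (CP X E (Suc n))"
    by (rule MS_cong) (rule CP_Suc[OF fin, symmetric])
  finally show ?case .
qed



definition comp :: "'v \<Rightarrow> nat \<Rightarrow> ('v,'k::field) mpoly \<Rightarrow> ('v,'k) mpoly" where
  "comp j d f = prestr (\<lambda>\<tau>. Poly_Mapping.lookup \<tau> j = d) f"

definition degs :: "'v \<Rightarrow> ('v,'k::field) mpoly \<Rightarrow> nat set" where
  "degs j f = (\<lambda>\<tau>. Poly_Mapping.lookup \<tau> j) ` Poly_Mapping.keys f"

lemma finite_degs[simp]: "finite (degs j f)"
  by (simp add: degs_def)

lemma degs_empty_iff: "degs j f = {} \<longleftrightarrow> f = 0"
  by (simp add: degs_def)

lemma keys_mult_deg:
  fixes f g :: "('v,'k::field) mpoly"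
  assumes "\<tau> \<in> Poly_Mapping.keys (f * g)"
  obtains x y where "x \<in> Poly_Mapping.keys f" "y \<in> Poly_Mapping.keys g" "\<tau> = x + y"
    "\<And>j. Poly_Mapping.lookup \<tau> j = Poly_Mapping.lookup x j + Poly_Mapping.lookup y j"
proof -
  from assms keys_mult[of f g] obtain x y where "x \<in> Poly_Mapping.keys f" "y \<in> Poly_Mapping.keys g" "\<tau> = x + y"
    by blast
  then show ?thesis using that by (simp add: lookup_add)
qed

lemma top_comp:
  fixes f g :: "('v,'k::field) mpoly"
  assumes fa: "\<forall>\<tau>\<in>Poly_Mapping.keys f. Poly_Mapping.lookup \<tau> j \<le> a"
    and gb: "\<forall>\<tau>\<in>Poly_Mapping.keys g. Poly_Mapping.lookup \<tau> j \<le> b"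
  shows "comp j (a + b) (f * g) = comp j a f * comp j b g"
proof -
  define f1 where "f1 = comp j a f"
  define f2 where "f2 = prestr (\<lambda>\<tau>. \<not> Poly_Mapping.lookup \<tau> j = a) f"
  define g1 where "g1 = comp j b g"
  define g2 where "g2 = prestr (\<lambda>\<tau>. \<not> Poly_Mapping.lookup \<tau> j = b) g"
  have f: "f = f1 + f2" unfolding f1_def f2_def comp_def by (rule prestr_split)
  have g: "g = g1 + g2" unfolding g1_def g2_def comp_def by (rule prestr_split)
  have kf1: "\<forall>\<tau>\<in>Poly_Mapping.keys f1. Poly_Mapping.lookup \<tau> j = a"
    unfolding f1_def comp_def keys_prestr by blast
  have kg1: "\<forall>\<tau>\<in>Poly_Mapping.keys g1. Poly_Mapping.lookup \<tau> j = b"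
    unfolding g1_def comp_def keys_prestr by blast
  have kf2: "\<forall>\<tau>\<in>Poly_Mapping.keys f2. Poly_Mapping.lookup \<tau> j < a"
    using fa unfolding f2_def keys_prestr by fastforce
  have kg2: "\<forall>\<tau>\<in>Poly_Mapping.keys g2. Poly_Mapping.lookup \<tau> j < b"
    using gb unfolding g2_def keys_prestr by fastforce
  have e11: "comp j (a + b) (f1 * g1) = f1 * g1"
    unfolding comp_def
  proof (rule prestr_id)
    fix \<tau> assume "\<tau> \<in> Poly_Mapping.keys (f1 * g1)"
    then obtain x y where "x \<in> Poly_Mapping.keys f1" "y \<in> Poly_Mapping.keys g1" "\<tau> = x + y"
      "\<And>j. Poly_Mapping.lookup \<tau> j = Poly_Mapping.lookup x j + Poly_Mapping.lookup y j"
      by (rule keys_mult_deg) blast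
    then show "Poly_Mapping.lookup \<tau> j = a + b" using kf1 kg1 by simp
  qed
  have e12: "comp j (a + b) (f1 * g2) = 0"
    unfolding comp_def
  proof (rule prestr_null)
    fix \<tau> assume "\<tau> \<in> Poly_Mapping.keys (f1 * g2)"
    then obtain x y where "x \<in> Poly_Mapping.keys f1" "y \<in> Poly_Mapping.keys g2" "\<tau> = x + y"
      "\<And>j. Poly_Mapping.lookup \<tau> j = Poly_Mapping.lookup x j + Poly_Mapping.lookup y j"
      by (rule keys_mult_deg) blast
    then show "\<not> Poly_Mapping.lookup \<tau> j = a + b" using kf1 kg2 by fastforce
  qed
  have e21: "comp j (a + b) (f2 * g1) = 0"
    unfolding comp_def
  proof (rule prestr_null)
    fix \<tau> assume "\<tau> \<in> Poly_Mapping.keys (f2 * g1)"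
    then obtain x y where "x \<in> Poly_Mapping.keys f2" "y \<in> Poly_Mapping.keys g1" "\<tau> = x + y"
      "\<And>j. Poly_Mapping.lookup \<tau> j = Poly_Mapping.lookup x j + Poly_Mapping.lookup y j"
      by (rule keys_mult_deg) blast
    then show "\<not> Poly_Mapping.lookup \<tau> j = a + b" using kf2 kg1 by fastforce
  qed
  have e22: "comp j (a + b) (f2 * g2) = 0"
    unfolding comp_def
  proof (rule prestr_null)
    fix \<tau> assume "\<tau> \<in> Poly_Mapping.keys (f2 * g2)"
    then obtain x y where "x \<in> Poly_Mapping.keys f2" "y \<in> Poly_Mapping.keys g2" "\<tau> = x + y"
      "\<And>j. Poly_Mapping.lookup \<tau> j = Poly_Mapping.lookup x j + Poly_Mapping.lookup y j"
      by (rule keys_mult_deg) blast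
    then show "\<not> Poly_Mapping.lookup \<tau> j = a + b" using kf2 kg2 by fastforce
  qed
  have fg: "f * g = f1 * g1 + f1 * g2 + f2 * g1 + f2 * g2"
    unfolding f g by (simp add: algebra_simps)
  have "comp j (a + b) (f * g) = comp j (a + b) (f1 * g1) + comp j (a + b) (f1 * g2)
     + comp j (a + b) (f2 * g1) + comp j (a + b) (f2 * g2)"
    unfolding fg comp_def by (simp only: prestr_add)
  then have "comp j (a + b) (f * g) = f1 * g1"
    by (simp add: e11 e12 e21 e22)
  then show ?thesis unfolding f1_def g1_def .
qed



definition homog :: "'v \<Rightarrow> ('v,'k::field) mpoly \<Rightarrow> bool" where
  "homog j f \<longleftrightarrow> (\<exists>d. \<forall>\<tau>\<in>Poly_Mapping.keys f. Poly_Mapping.lookup \<tau> j = d)"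

lemma keys_comp: "Poly_Mapping.keys (comp j d f) = {\<tau> \<in> Poly_Mapping.keys f. Poly_Mapping.lookup \<tau> j = d}"
  by (simp add: comp_def keys_prestr)

lemma comp_top_nonzero:
  assumes "f \<noteq> 0"
  shows "comp j (Max (degs j f)) f \<noteq> 0"
proof -
  have "degs j f \<noteq> {}" using assms by (simp add: degs_empty_iff)
  then have "Max (degs j f) \<in> degs j f" by simp
  then obtain \<tau> where "\<tau> \<in> Poly_Mapping.keys f" "Poly_Mapping.lookup \<tau> j = Max (degs j f)"
    unfolding degs_def by (auto elim!: imageE)
  then have "\<tau> \<in> Poly_Mapping.keys (comp j (Max (degs j f)) f)" by (simp add: keys_comp)
  then show ?thesis by auto
qed

lemma le_Max_degs: "\<forall>\<tau>\<in>Poly_Mapping.keys f. Poly_Mapping.lookup \<tau> j \<le> Max (degs j f)"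
  unfolding degs_def by simp

lemma single_keys_eq:
  fixes f :: "('v,'k::field) mpoly"
  assumes "f \<in> polys_in X" and "\<forall>j\<in>X. homog j f" and "\<kappa> \<in> Poly_Mapping.keys f"
  shows "f = Poly_Mapping.single \<kappa> (Poly_Mapping.lookup f \<kappa>)"
proof (rule poly_mapping_eqI)
  fix \<sigma>
  show "Poly_Mapping.lookup f \<sigma> = Poly_Mapping.lookup (Poly_Mapping.single \<kappa> (Poly_Mapping.lookup f \<kappa>)) \<sigma>"
  proof (cases "\<sigma> \<in> Poly_Mapping.keys f")
    case True
    have "\<sigma> = \<kappa>"
    proof (rule poly_mapping_eqI)
      fix j
      show "Poly_Mapping.lookup \<sigma> j = Poly_Mapping.lookup \<kappa> j"
      proof (cases "j \<in> X")
        case True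
        then obtain d where "\<forall>\<tau>\<in>Poly_Mapping.keys f. Poly_Mapping.lookup \<tau> j = d"
          using assms(2) unfolding homog_def by blast
        then show ?thesis using \<open>\<sigma> \<in> Poly_Mapping.keys f\<close> assms(3) by simp
      next
        case False
        have "Poly_Mapping.keys \<sigma> \<subseteq> X" "Poly_Mapping.keys \<kappa> \<subseteq> X"
          using assms(1) \<open>\<sigma> \<in> Poly_Mapping.keys f\<close> assms(3) by (auto simp: polys_in_iff)
        then have "j \<notin> Poly_Mapping.keys \<sigma>" "j \<notin> Poly_Mapping.keys \<kappa>" using False by blast+
        then show ?thesis by (simp add: in_keys_iff)
      qed
    qed
    then show ?thesis by simp
  next
    case False
    then have "\<sigma> \<noteq> \<kappa>" using assms(3) by blast
    then show ?thesis using False by (simp add: in_keys_iff lookup_single_not_eq)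
  qed
qed

lemma domain_gen:
  fixes X Z :: "'v set"
  assumes finZ: "finite Z"
  shows "\<forall>f g :: ('v,'k::field) mpoly. f \<in> polys_in X \<longrightarrow> g \<in> polys_in X \<longrightarrow> f \<noteq> 0 \<longrightarrow> g \<noteq> 0 \<longrightarrow>
     (\<forall>j\<in>X - Z. homog j f \<and> homog j g) \<longrightarrow> f * g \<noteq> 0"
  using finZ
proof (induction Z rule: finite_induct)
  case empty
  show ?case
  proof (intro allI impI)
    fix f g :: "('v,'k) mpoly"
    assume f: "f \<in> polys_in X" and g: "g \<in> polys_in X" and f0: "f \<noteq> 0" and g0: "g \<noteq> 0"
      and h: "\<forall>j\<in>X - {}. homog j f \<and> homog j g"
    obtain \<kappa> where k: "\<kappa> \<in> Poly_Mapping.keys f" using f0 by fastforce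
    obtain \<kappa>' where k': "\<kappa>' \<in> Poly_Mapping.keys g" using g0 by fastforce
    have ef: "f = Poly_Mapping.single \<kappa> (Poly_Mapping.lookup f \<kappa>)"
      using single_keys_eq[OF f _ k] h by blast
    have eg: "g = Poly_Mapping.single \<kappa>' (Poly_Mapping.lookup g \<kappa>')"
      using single_keys_eq[OF g _ k'] h by blast
    have "f * g = Poly_Mapping.single (\<kappa> + \<kappa>') (Poly_Mapping.lookup f \<kappa> * Poly_Mapping.lookup g \<kappa>')"
      by (subst ef, subst eg) (simp add: mult_single)
    moreover have "Poly_Mapping.lookup f \<kappa> * Poly_Mapping.lookup g \<kappa>' \<noteq> 0"
      using k k' by (simp add: in_keys_iff)
    ultimately show "f * g \<noteq> 0" by (metis single_zero inj_single injD)
  qed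
next
  case (insert z Z)
  show ?case
  proof (intro allI impI)
    fix f g :: "('v,'k) mpoly"
    assume f: "f \<in> polys_in X" and g: "g \<in> polys_in X" and f0: "f \<noteq> 0" and g0: "g \<noteq> 0"
      and h: "\<forall>j\<in>X - insert z Z. homog j f \<and> homog j g"
    define a where "a = Max (degs z f)"
    define b where "b = Max (degs z g)"
    define f' where "f' = comp z a f"
    define g' where "g' = comp z b g"
    have f'0: "f' \<noteq> 0" unfolding f'_def a_def by (rule comp_top_nonzero[OF f0])
    have g'0: "g' \<noteq> 0" unfolding g'_def b_def by (rule comp_top_nonzero[OF g0])
    have f'S: "f' \<in> polys_in X" unfolding f'_def comp_def by (rule polys_prestr[OF f])
    have g'S: "g' \<in> polys_in X" unfolding g'_def comp_def by (rule polys_prestr[OF g])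
    have hf: "homog j f'" if "j \<in> X - Z" for j
    proof (cases "j = z")
      case True
      then show ?thesis unfolding homog_def f'_def keys_comp by blast
    next
      case False
      then have "homog j f" using h that by blast
      then show ?thesis unfolding homog_def f'_def keys_comp by blast
    qed
    have hg: "homog j g'" if "j \<in> X - Z" for j
    proof (cases "j = z")
      case True
      then show ?thesis unfolding homog_def g'_def keys_comp by blast
    next
      case False
      then have "homog j g" using h that by blast
      then show ?thesis unfolding homog_def g'_def keys_comp by blast
    qed
    have "f' * g' \<noteq> 0"
      using insert.IH f'S g'S f'0 g'0 hf hg by blast
    moreover have "comp z (a + b) (f * g) = f' * g'"
      unfolding f'_def g'_def a_def b_def by (rule top_comp[OF le_Max_degs le_Max_degs])
    ultimately show "f * g \<noteq> 0" by (auto simp: comp_def)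
  qed
qed

lemma domain:
  fixes f g :: "('v,'k::field) mpoly"
  assumes "finite X" "f \<in> polys_in X" "g \<in> polys_in X" "f \<noteq> 0" "g \<noteq> 0"
  shows "f * g \<noteq> 0"
  using domain_gen[OF assms(1), of X] assms(2-5) by blast



lemma degs_mult_homog:
  fixes fa h :: "('v,'k::field) mpoly"
  assumes "\<forall>\<tau>\<in>Poly_Mapping.keys fa. Poly_Mapping.lookup \<tau> j = a"
  shows "degs j (fa * h) \<subseteq> (\<lambda>x. a + x) ` degs j h"
proof
  fix d assume "d \<in> degs j (fa * h)"
  then obtain \<tau> where t: "\<tau> \<in> Poly_Mapping.keys (fa * h)" "d = Poly_Mapping.lookup \<tau> j"
    unfolding degs_def by (auto elim!: imageE)
  from t(1) obtain x y where "x \<in> Poly_Mapping.keys fa" "y \<in> Poly_Mapping.keys h" "\<tau> = x + y"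
      "\<And>j. Poly_Mapping.lookup \<tau> j = Poly_Mapping.lookup x j + Poly_Mapping.lookup y j"
    by (rule keys_mult_deg) blast
  then have "d = a + Poly_Mapping.lookup y j" using t(2) assms by simp
  moreover have "Poly_Mapping.lookup y j \<in> degs j h" using \<open>y \<in> Poly_Mapping.keys h\<close> unfolding degs_def by (rule imageI)
  ultimately show "d \<in> (\<lambda>x. a + x) ` degs j h" by (rule image_eqI)
qed

lemma comp_rest:
  fixes g :: "('v,'k::field) mpoly"
  shows "g - comp j b g = prestr (\<lambda>\<tau>. \<not> Poly_Mapping.lookup \<tau> j = b) g"
  using prestr_split[of g "\<lambda>\<tau>. Poly_Mapping.lookup \<tau> j = b"] unfolding comp_def
  by (simp add: algebra_simps)

lemma degs_prestr_not: "degs j (prestr (\<lambda>\<tau>. \<not> Poly_Mapping.lookup \<tau> j = b) g) = degs j g - {b}"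
  unfolding degs_def keys_prestr by auto

definition Ann :: "'v set \<Rightarrow> (('v \<Rightarrow>\<^sub>0 nat) \<Rightarrow> bool) \<Rightarrow> ('v,'k::field) mpoly \<Rightarrow> ('v,'k) mpoly set" where
  "Ann X M g = {f \<in> polys_in X. f * g \<in> MS X M}"

context
  fixes X :: "'v set" and M :: "('v \<Rightarrow>\<^sub>0 nat) \<Rightarrow> bool" and P :: "('v,'k::field) mpoly set"
  assumes finX: "finite X" and up: "upclosed X M" and prime: "is_prime_in (polys_in X) P"
begin

lemma P_ideal: "is_ideal_in (polys_in X) P"
  using prime unfolding is_prime_in_def by blast

lemma I_ideal: "is_ideal_in (polys_in X) (MS X M :: ('v,'k) mpoly set)"
  by (rule MS_ideal[OF up])

lemma one_notin: "(1::('v,'k) mpoly) \<notin> P"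
proof
  assume "1 \<in> P"
  have "polys_in X \<subseteq> P"
  proof
    fix r :: "('v,'k) mpoly" assume "r \<in> polys_in X"
    then have "r * 1 \<in> P" using id_mult[OF P_ideal] \<open>1 \<in> P\<close> by blast
    then show "r \<in> P" by simp
  qed
  moreover have "P \<subseteq> polys_in X" using P_ideal unfolding is_ideal_in_def by blast
  ultimately show False using prime unfolding is_prime_in_def by blast
qed

lemma P_prime: "a \<in> polys_in X \<Longrightarrow> b \<in> polys_in X \<Longrightarrow> a * b \<in> P \<Longrightarrow> a \<in> P \<or> b \<in> P"
  using prime unfolding is_prime_in_def by blast

lemma P_sub: "f \<in> P \<Longrightarrow> f \<in> polys_in X"
  by (rule id_sub[OF P_ideal])

lemma Ann_P: "Ann X M g = P \<Longrightarrow> f \<in> P \<Longrightarrow> f * g \<in> MS X M"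
  unfolding Ann_def by blast

lemma top_in_P:
  "card (degs j g) = n \<Longrightarrow> g \<in> polys_in X \<Longrightarrow> Ann X M g = P \<Longrightarrow> f \<in> P \<Longrightarrow> f \<noteq> 0
    \<Longrightarrow> comp j (Max (degs j f)) f \<in> P"
proof (induction n arbitrary: g rule: less_induct)
  case (less n)
  have g0: "g \<noteq> 0"
  proof
    assume "g = 0"
    then have "1 \<in> Ann X M g" unfolding Ann_def by (simp add: MS_iff)
    then show False using less.prems(3) one_notin by blast
  qed
  define a where "a = Max (degs j f)"
  define b where "b = Max (degs j g)"
  define fa where "fa = comp j a f"
  define gb where "gb = comp j b g"
  have fS: "f \<in> polys_in X" using P_sub less.prems(4) .
  have faS: "fa \<in> polys_in X" unfolding fa_def comp_def by (rule polys_prestr[OF fS])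
  have gbS: "gb \<in> polys_in X" unfolding gb_def comp_def by (rule polys_prestr[OF less.prems(2)])
  have "f * g \<in> MS X M" by (rule Ann_P[OF less.prems(3,4)])
  then have "comp j (a + b) (f * g) \<in> MS X M" unfolding comp_def by (rule MS_restr)
  moreover have "comp j (a + b) (f * g) = fa * gb"
    unfolding fa_def gb_def a_def b_def by (rule top_comp[OF le_Max_degs le_Max_degs])
  ultimately have fagb: "fa * gb \<in> MS X M" by simp
  show ?case
  proof (rule ccontr)
    assume nfa: "comp j (Max (degs j f)) f \<notin> P"
    then have nfa': "fa \<notin> P" unfolding fa_def a_def .
    define g' where "g' = fa * (g - gb)"
    have g'S: "g' \<in> polys_in X" unfolding g'_def
      by (intro polys_mult polys_diff faS less.prems(2) gbS)
    have "Ann X M g' = P"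
    proof (rule set_eqI)
      fix h :: "('v,'k) mpoly"
      show "h \<in> Ann X M g' \<longleftrightarrow> h \<in> P"
      proof (cases "h \<in> polys_in X")
        case False
        then show ?thesis using P_sub unfolding Ann_def by blast
      next
        case hS: True
        have e: "h * g' = (h * fa) * g - h * (fa * gb)" unfolding g'_def by (simp add: algebra_simps)
        have hfagb: "h * (fa * gb) \<in> MS X M" by (rule id_mult[OF I_ideal hS fagb])
        have hfaS: "h * fa \<in> polys_in X" by (rule polys_mult[OF hS faS])
        have "h * g' \<in> MS X M \<longleftrightarrow> (h * fa) * g \<in> MS X M"
          unfolding e by (rule id_diff_iff[OF I_ideal polys_mult[OF hfaS less.prems(2)] hfagb])
        also have "\<dots> \<longleftrightarrow> h * fa \<in> P"
          using less.prems(3) hfaS unfolding Ann_def by blast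
        also have "\<dots> \<longleftrightarrow> h \<in> P"
        proof
          assume "h * fa \<in> P"
          then show "h \<in> P" using P_prime[OF hS faS] nfa' by blast
        next
          assume "h \<in> P"
          then show "h * fa \<in> P" by (rule id_mult2[OF P_ideal faS])
        qed
        finally show ?thesis using hS unfolding Ann_def by blast
      qed
    qed
    moreover have "card (degs j g') < n"
    proof -
      have hom: "\<forall>\<tau>\<in>Poly_Mapping.keys fa. Poly_Mapping.lookup \<tau> j = a"
        unfolding fa_def keys_comp by blast
      have "degs j g' \<subseteq> (\<lambda>x. a + x) ` (degs j g - {b})"
        using degs_mult_homog[OF hom, of "g - gb"] unfolding g'_def gb_def comp_rest degs_prestr_not .
      then have "card (degs j g') \<le> card ((\<lambda>x. a + x) ` (degs j g - {b}))"
        by (rule card_mono[rotated]) simp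
      also have "\<dots> \<le> card (degs j g - {b})" by (rule card_image_le) simp
      also have "\<dots> < card (degs j g)"
      proof -
        have "degs j g \<noteq> {}" using g0 by (simp add: degs_empty_iff)
        then have "b \<in> degs j g" unfolding b_def by simp
        then show ?thesis by (rule card_Diff1_less[OF finite_degs])
      qed
      finally show ?thesis using less.prems(1) by simp
    qed
    ultimately have "comp j (Max (degs j f)) f \<in> P"
      using less.IH g'S less.prems(4,5) by blast
    then show False using nfa by blast
  qed
qed

lemma comp_in_P:
  assumes gS: "g \<in> polys_in X" and Ag: "Ann X M g = P"
  shows "f \<in> P \<Longrightarrow> comp j d f \<in> P"
proof (induction "card (degs j f)" arbitrary: f rule: less_induct)
  case less
  show ?case
  proof (cases "f = 0")
    case True
    then show ?thesis using id_zero[OF P_ideal] by (simp add: comp_def)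
  next
    case False
    define a where "a = Max (degs j f)"
    define fa where "fa = comp j a f"
    define f' where "f' = prestr (\<lambda>\<tau>. \<not> Poly_Mapping.lookup \<tau> j = a) f"
    have faP: "fa \<in> P" unfolding fa_def a_def by (rule top_in_P[OF refl gS Ag less.prems False])
    have split: "f = fa + f'" unfolding fa_def f'_def comp_def by (rule prestr_split)
    have f'P: "f' \<in> P"
    proof -
      have "f' = f - fa" using split by (simp add: algebra_simps)
      then show ?thesis using id_diff[OF P_ideal less.prems faP] by simp
    qed
    have "card (degs j f') < card (degs j f)"
    proof -
      have "degs j f \<noteq> {}" using False by (simp add: degs_empty_iff)
      then have "a \<in> degs j f" unfolding a_def by simp
      then show ?thesis unfolding f'_def degs_prestr_not by (rule card_Diff1_less[OF finite_degs])
    qed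
    then have c': "comp j d f' \<in> P" using less.hyps f'P by blast
    have cfa: "comp j d fa \<in> P"
    proof (cases "d = a")
      case True
      have "comp j d fa = fa" unfolding fa_def comp_def prestr_prestr True
        by (rule arg_cong[where f="\<lambda>Q. prestr Q f"]) auto
      then show ?thesis using faP by simp
    next
      case False
      have "comp j d fa = 0" unfolding fa_def comp_def prestr_prestr
        using False by (intro prestr_null) auto
      then show ?thesis using id_zero[OF P_ideal] by simp
    qed
    have "comp j d f = comp j d fa + comp j d f'"
      by (subst split) (simp add: comp_def prestr_add)
    then show ?thesis using id_add[OF P_ideal cfa c'] by simp
  qed
qed

lemma mon_in_P:
  assumes gS: "g \<in> polys_in X" and Ag: "Ann X M g = P" and fP: "f \<in> P" and t: "\<tau> \<in> Poly_Mapping.keys f"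
  shows "Poly_Mapping.single \<tau> 1 \<in> P"
proof -
  have R: "prestr (\<lambda>\<sigma>. \<forall>j\<in>Z. Poly_Mapping.lookup \<sigma> j = Poly_Mapping.lookup \<tau> j) f \<in> P" if "finite Z" for Z
    using that
  proof (induction Z rule: finite_induct)
    case empty
    have "prestr (\<lambda>\<sigma>. \<forall>j\<in>{}. Poly_Mapping.lookup \<sigma> j = Poly_Mapping.lookup \<tau> j) f = f"
      by (rule prestr_id) simp
    then show ?case using fP by simp
  next
    case (insert z Z)
    have "prestr (\<lambda>\<sigma>. \<forall>j\<in>insert z Z. Poly_Mapping.lookup \<sigma> j = Poly_Mapping.lookup \<tau> j) f
       = comp z (Poly_Mapping.lookup \<tau> z) (prestr (\<lambda>\<sigma>. \<forall>j\<in>Z. Poly_Mapping.lookup \<sigma> j = Poly_Mapping.lookup \<tau> j) f)"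
      unfolding comp_def prestr_prestr by (rule arg_cong[where f="\<lambda>Q. prestr Q f"]) auto
    then show ?case using comp_in_P[OF gS Ag insert.IH] by simp
  qed
  have fS: "f \<in> polys_in X" by (rule P_sub[OF fP])
  have "prestr (\<lambda>\<sigma>. \<forall>j\<in>X. Poly_Mapping.lookup \<sigma> j = Poly_Mapping.lookup \<tau> j) f
      = Poly_Mapping.single \<tau> (Poly_Mapping.lookup f \<tau>)"
  proof (rule poly_mapping_eqI)
    fix \<sigma>
    show "Poly_Mapping.lookup (prestr (\<lambda>\<sigma>. \<forall>j\<in>X. Poly_Mapping.lookup \<sigma> j = Poly_Mapping.lookup \<tau> j) f) \<sigma>
        = Poly_Mapping.lookup (Poly_Mapping.single \<tau> (Poly_Mapping.lookup f \<tau>)) \<sigma>"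
    proof (cases "\<sigma> = \<tau>")
      case True
      then show ?thesis by (simp add: lookup_prestr)
    next
      case False
      show ?thesis
      proof (cases "\<sigma> \<in> Poly_Mapping.keys f")
        case True
        have kt: "Poly_Mapping.keys \<tau> \<subseteq> X" "Poly_Mapping.keys \<sigma> \<subseteq> X"
          using fS t True by (auto simp: polys_in_iff)
        have "\<not> (\<forall>j\<in>X. Poly_Mapping.lookup \<sigma> j = Poly_Mapping.lookup \<tau> j)"
        proof
          assume A: "\<forall>j\<in>X. Poly_Mapping.lookup \<sigma> j = Poly_Mapping.lookup \<tau> j"
          have "\<sigma> = \<tau>"
          proof (rule poly_mapping_eqI)
            fix j show "Poly_Mapping.lookup \<sigma> j = Poly_Mapping.lookup \<tau> j"
            proof (cases "j \<in> X")
              case True then show ?thesis using A by blast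
            next
              case False
              then have "j \<notin> Poly_Mapping.keys \<sigma>" "j \<notin> Poly_Mapping.keys \<tau>" using kt by blast+
              then show ?thesis by (simp add: in_keys_iff)
            qed
          qed
          then show False using \<open>\<sigma> \<noteq> \<tau>\<close> by contradiction
        qed
        then have "Poly_Mapping.lookup (prestr (\<lambda>\<sigma>. \<forall>j\<in>X. Poly_Mapping.lookup \<sigma> j = Poly_Mapping.lookup \<tau> j) f) \<sigma> = 0"
          by (simp only: lookup_prestr if_not_P if_False)
        moreover have "Poly_Mapping.lookup (Poly_Mapping.single \<tau> (Poly_Mapping.lookup f \<tau>)) \<sigma> = 0"
          using \<open>\<sigma> \<noteq> \<tau>\<close> by (simp add: lookup_single_not_eq)
        ultimately show ?thesis by simp
      next
        case False
        then show ?thesis using \<open>\<sigma> \<noteq> \<tau>\<close> by (simp add: lookup_prestr lookup_single_not_eq in_keys_iff)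
      qed
    qed
  qed
  then have sP: "Poly_Mapping.single \<tau> (Poly_Mapping.lookup f \<tau>) \<in> P" using R[OF finX] by simp
  have c: "Poly_Mapping.lookup f \<tau> \<noteq> 0" using t by (simp add: in_keys_iff)
  have "Poly_Mapping.single \<tau> 1 = Poly_Mapping.single 0 (inverse (Poly_Mapping.lookup f \<tau>)) * Poly_Mapping.single \<tau> (Poly_Mapping.lookup f \<tau>)"
    using c by (simp add: mult_single)
  then show ?thesis using id_mult[OF P_ideal polys_single0 sP] by simp
qed

end



lemma single_plus1: "Poly_Mapping.single (k + l) (1::'k::field) = Poly_Mapping.single k 1 * Poly_Mapping.single l 1"
  by (simp add: mult_single)

lemma polys_power: "x \<in> polys_in X \<Longrightarrow> x ^ k \<in> polys_in X"
  by (induction k) (auto intro: polys_mult)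

lemma single_single_pow: "Poly_Mapping.single (Poly_Mapping.single x k) (1::'k::field) = (var x :: ('v,'k) mpoly) ^ k"
proof (induction k)
  case 0
  then show ?case by simp
next
  case (Suc k)
  have "Poly_Mapping.single x (Suc k) = Poly_Mapping.single x 1 + Poly_Mapping.single x k"
    by (simp flip: single_add)
  then show ?case using Suc by (simp only: single_plus1 power_Suc var_def)
qed

lemma single_sum_prod:
  "finite A \<Longrightarrow> Poly_Mapping.single (\<Sum>a\<in>A. Poly_Mapping.single a (n a)) (1::'k::field)
      = (\<Prod>a\<in>A. (var a :: ('v,'k) mpoly) ^ n a)"
proof (induction A rule: finite_induct)
  case empty
  then show ?case by simp
next
  case (insert x F)
  then show ?case by (simp add: single_plus1 single_single_pow)
qed

lemma mon_prod: "Poly_Mapping.single \<kappa> (1::'k::field) = (\<Prod>a\<in>Poly_Mapping.keys \<kappa>. (var a :: ('v,'k) mpoly) ^ Poly_Mapping.lookup \<kappa> a)"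
proof -
  have "\<kappa> = (\<Sum>a\<in>Poly_Mapping.keys \<kappa>. Poly_Mapping.single a (Poly_Mapping.lookup \<kappa> a))"
    by (rule poly_expand)
  then have "Poly_Mapping.single \<kappa> (1::'k) = Poly_Mapping.single (\<Sum>a\<in>Poly_Mapping.keys \<kappa>. Poly_Mapping.single a (Poly_Mapping.lookup \<kappa> a)) 1"
    by (rule arg_cong)
  also have "\<dots> = (\<Prod>a\<in>Poly_Mapping.keys \<kappa>. (var a :: ('v,'k) mpoly) ^ Poly_Mapping.lookup \<kappa> a)"
    by (rule single_sum_prod) simp
  finally show ?thesis .
qed

context
  fixes X :: "'v set" and P :: "('v,'k::field) mpoly set"
  assumes pr: "is_prime_in (polys_in X) P"
begin

lemma P_ideal': "is_ideal_in (polys_in X) P"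
  using pr unfolding is_prime_in_def by blast

lemma one_notin': "(1::('v,'k) mpoly) \<notin> P"
proof
  assume "1 \<in> P"
  have "polys_in X \<subseteq> P"
  proof
    fix r :: "('v,'k) mpoly" assume "r \<in> polys_in X"
    then have "r * 1 \<in> P" using id_mult[OF P_ideal'] \<open>1 \<in> P\<close> by blast
    then show "r \<in> P" by simp
  qed
  moreover have "P \<subseteq> polys_in X" using P_ideal' unfolding is_ideal_in_def by blast
  ultimately show False using pr unfolding is_prime_in_def by blast
qed

lemma P_prime': "a \<in> polys_in X \<Longrightarrow> b \<in> polys_in X \<Longrightarrow> a * b \<in> P \<Longrightarrow> a \<in> P \<or> b \<in> P"
  using pr unfolding is_prime_in_def by blast

lemma prime_pow: "x \<in> polys_in X \<Longrightarrow> x ^ k \<in> P \<Longrightarrow> x \<in> P"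
proof (induction k)
  case 0
  then show ?case using one_notin' by simp
next
  case (Suc k)
  have "x ^ k \<in> polys_in X" by (rule polys_power[OF Suc.prems(1)])
  then show ?case using P_prime'[OF Suc.prems(1)] Suc by auto
qed

lemma prime_prod: "finite A \<Longrightarrow> (\<And>a. a \<in> A \<Longrightarrow> h a \<in> polys_in X) \<Longrightarrow> prod h A \<in> P \<Longrightarrow> \<exists>a\<in>A. h a \<in> P"
proof (induction A rule: finite_induct)
  case empty
  then show ?case using one_notin' by simp
next
  case (insert x F)
  have "prod h F \<in> polys_in X" by (rule polys_prod) (simp add: insert.prems(1))
  then have "h x \<in> P \<or> prod h F \<in> P"
    using P_prime'[of "h x" "prod h F"] insert by simp
  then show ?case using insert by blast
qed

lemma mon_var_in_P:
  assumes "Poly_Mapping.single \<kappa> 1 \<in> P" "Poly_Mapping.keys \<kappa> \<subseteq> X"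
  shows "\<exists>a\<in>Poly_Mapping.keys \<kappa>. var a \<in> P"
proof -
  have mp: "Poly_Mapping.single \<kappa> (1::'k) = (\<Prod>a\<in>Poly_Mapping.keys \<kappa>. (var a :: ('v,'k) mpoly) ^ Poly_Mapping.lookup \<kappa> a)"
    by (rule mon_prod)
  have pP: "(\<Prod>a\<in>Poly_Mapping.keys \<kappa>. (var a :: ('v,'k) mpoly) ^ Poly_Mapping.lookup \<kappa> a) \<in> P"
    using assms(1) unfolding mp .
  have pS:  "(var a :: ('v,'k) mpoly) ^ Poly_Mapping.lookup \<kappa> a \<in> polys_in X" if "a \<in> Poly_Mapping.keys \<kappa>" for a
  proof -
    have "a \<in> X" using that assms(2) by blast
    then show ?thesis by (intro polys_power polys_var)
  qed
  have "\<exists>a\<in>Poly_Mapping.keys \<kappa>. (var a :: ('v,'k) mpoly) ^ Poly_Mapping.lookup \<kappa> a \<in> P"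
    by (rule prime_prod[OF finite_keys pS pP])
  then obtain a where "a \<in> Poly_Mapping.keys \<kappa>" "(var a :: ('v,'k) mpoly) ^ Poly_Mapping.lookup \<kappa> a \<in> P"
    by blast
  moreover have "a \<in> X" using \<open>a \<in> Poly_Mapping.keys \<kappa>\<close> assms(2) by blast
  moreover have "var a \<in> polys_in X" using calculation(3) by (rule polys_var)
  ultimately show ?thesis using prime_pow by blast
qed

end



definition hasA :: "'v set \<Rightarrow> 'v set \<Rightarrow> ('v \<Rightarrow>\<^sub>0 nat) \<Rightarrow> bool" where
  "hasA X A \<mu> \<longleftrightarrow> Poly_Mapping.keys \<mu> \<subseteq> X \<and> (\<exists>a\<in>A. 0 < Poly_Mapping.lookup \<mu> a)"

definition AssC :: "'v set \<Rightarrow> (('v \<Rightarrow>\<^sub>0 nat) \<Rightarrow> bool) \<Rightarrow> 'v set \<Rightarrow> bool" where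
  "AssC X M A \<longleftrightarrow> (\<exists>\<mu>. Poly_Mapping.keys \<mu> \<subseteq> X \<and> \<not> M \<mu> \<and>
      (\<forall>\<nu>. Poly_Mapping.keys \<nu> \<subseteq> X \<longrightarrow> (M (\<mu> + \<nu>) \<longleftrightarrow> (\<exists>a\<in>A. 0 < Poly_Mapping.lookup \<nu> a))))"

lemma in_ideal_by_mons:
  fixes f :: "('v,'k::field) mpoly"
  assumes J: "is_ideal_in (polys_in X) J" and f: "f \<in> polys_in X"
    and m: "\<And>\<tau>. \<tau> \<in> Poly_Mapping.keys f \<Longrightarrow> Poly_Mapping.single \<tau> 1 \<in> J"
  shows "f \<in> J"
proof -
  have "Poly_Mapping.single \<tau> (Poly_Mapping.lookup f \<tau>) \<in> J" if "\<tau> \<in> Poly_Mapping.keys f" for \<tau>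
  proof -
    have "Poly_Mapping.single \<tau> (Poly_Mapping.lookup f \<tau>) = Poly_Mapping.single 0 (Poly_Mapping.lookup f \<tau>) * Poly_Mapping.single \<tau> 1"
      by (simp add: mult_single)
    then show ?thesis using id_mult[OF J polys_single0 m[OF that]] by simp
  qed
  then have "(\<Sum>\<tau>\<in>Poly_Mapping.keys f. Poly_Mapping.single \<tau> (Poly_Mapping.lookup f \<tau>)) \<in> J"
    by (rule id_sum[OF J])
  moreover have "f = (\<Sum>\<tau>\<in>Poly_Mapping.keys f. Poly_Mapping.single \<tau> (Poly_Mapping.lookup f \<tau>))"
    by (rule poly_expand)
  ultimately show ?thesis by simp
qed

lemma mon_by_var:
  assumes J: "is_ideal_in (polys_in X) (J :: ('v,'k::field) mpoly set)"
    and kX: "Poly_Mapping.keys \<tau> \<subseteq> X" and pos: "0 < Poly_Mapping.lookup \<tau> a" and va: "var a \<in> J"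
  shows "Poly_Mapping.single \<tau> 1 \<in> J"
proof -
  have e: "\<tau> = Poly_Mapping.single a 1 + (\<tau> - Poly_Mapping.single a 1)"
    by (rule poly_mapping_eqI) (use pos in \<open>auto simp: lookup_add lookup_minus_nat lookup_single when_def\<close>)
  have k: "Poly_Mapping.keys (\<tau> - Poly_Mapping.single a 1) \<subseteq> X" by (rule subset_trans[OF keys_minus_nat kX])
  have "Poly_Mapping.single \<tau> (1::'k) = var a * Poly_Mapping.single (\<tau> - Poly_Mapping.single a 1) 1"
    unfolding var_def by (subst e) (simp add: mult_single)
  then show ?thesis using id_mult2[OF J polys_single[OF k] va] by simp
qed

lemma mult_mon_MS:
  fixes f :: "('v,'k::field) mpoly"
  assumes kX: "Poly_Mapping.keys \<mu> \<subseteq> X" and f: "f \<in> polys_in X"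
  shows "f * Poly_Mapping.single \<mu> 1 \<in> MS X M \<longleftrightarrow> (\<forall>\<tau>\<in>Poly_Mapping.keys f. M (\<tau> + \<mu>))"
proof -
  have "f * Poly_Mapping.single \<mu> 1 \<in> polys_in X" by (rule polys_mult[OF f polys_single[OF kX]])
  then show ?thesis unfolding MS_iff keys_mult_single by simp
qed

lemma hasA_upclosed: "upclosed X (hasA X A)"
  unfolding upclosed_def hasA_def
  by (auto simp: keys_add_nat lookup_add intro: add_pos_nonneg)

lemma hasA_prime:
  assumes finX: "finite X"
  shows "is_prime_in (polys_in X) (MS X (hasA X A) :: ('v,'k::field) mpoly set)"
proof -
  let ?P = "MS X (hasA X A) :: ('v,'k) mpoly set"
  let ?Q = "\<lambda>\<tau>. \<exists>a\<in>A. 0 < Poly_Mapping.lookup \<tau> a"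
  have PI: "is_ideal_in (polys_in X) ?P" by (rule MS_ideal[OF hasA_upclosed])
  have one: "(1::('v,'k) mpoly) \<notin> ?P" by (simp add: MS_iff hasA_def)
  have ne: "?P \<noteq> polys_in X" using one polys_one by blast
  have pr: "a \<in> ?P \<or> b \<in> ?P" if a: "a \<in> polys_in X" and b: "b \<in> polys_in X" and ab: "a * b \<in> ?P" for a b
  proof (rule ccontr)
    assume "\<not> (a \<in> ?P \<or> b \<in> ?P)"
    then have na: "a \<notin> ?P" and nb: "b \<notin> ?P" by auto
    define a0 where "a0 = prestr (\<lambda>\<tau>. \<not> ?Q \<tau>) a"
    define a1 where "a1 = prestr ?Q a"
    define b0 where "b0 = prestr (\<lambda>\<tau>. \<not> ?Q \<tau>) b"
    define b1 where "b1 = prestr ?Q b"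
    have a01: "a = a1 + a0" unfolding a0_def a1_def by (rule prestr_split)
    have b01: "b = b1 + b0" unfolding b0_def b1_def by (rule prestr_split)
    have a1P: "a1 \<in> ?P" unfolding a1_def using a by (auto simp: MS_iff hasA_def keys_prestr polys_in_iff)
    have b1P: "b1 \<in> ?P" unfolding b1_def using b by (auto simp: MS_iff hasA_def keys_prestr polys_in_iff)
    have a0S: "a0 \<in> polys_in X" unfolding a0_def by (rule polys_prestr[OF a])
    have b0S: "b0 \<in> polys_in X" unfolding b0_def by (rule polys_prestr[OF b])
    have a00: "a0 \<noteq> 0"
    proof
      assume "a0 = 0"
      then have "a = a1" using a01 by simp
      then show False using na a1P by simp
    qed
    have b00: "b0 \<noteq> 0"
    proof
      assume "b0 = 0"
      then have "b = b1" using b01 by simp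
      then show False using nb b1P by simp
    qed
    have "a0 * b0 = a * b - a1 * b - a0 * b1"
      unfolding a01 b01 by (simp add: algebra_simps)
    moreover have "a1 * b \<in> ?P" by (rule id_mult2[OF PI b a1P])
    moreover have "a0 * b1 \<in> ?P" by (rule id_mult[OF PI a0S b1P])
    ultimately have "a0 * b0 \<in> ?P" using id_diff[OF PI] ab by simp
    moreover have "a0 * b0 \<noteq> 0" by (rule domain[OF finX a0S b0S a00 b00])
    then obtain \<tau> where t: "\<tau> \<in> Poly_Mapping.keys (a0 * b0)" by fastforce
    ultimately have "?Q \<tau>" by (simp add: MS_iff hasA_def)
    moreover from t obtain x y where "x \<in> Poly_Mapping.keys a0" "y \<in> Poly_Mapping.keys b0" "\<tau> = x + y"
      "\<And>j. Poly_Mapping.lookup \<tau> j = Poly_Mapping.lookup x j + Poly_Mapping.lookup y j"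
      by (rule keys_mult_deg) blast
    ultimately show False unfolding a0_def b0_def keys_prestr by auto
  qed
  show ?thesis unfolding is_prime_in_def using PI ne pr by blast
qed



theorem bridge:
  fixes M :: "('v \<Rightarrow>\<^sub>0 nat) \<Rightarrow> bool"
  assumes finX: "finite X" and up: "upclosed X M"
  shows "Ass (polys_in X) (MS X M :: ('v,'k::field) mpoly set)
     = (\<lambda>A. MS X (hasA X A)) ` {A. A \<subseteq> X \<and> AssC X M A}"
proof
  show "Ass (polys_in X) (MS X M :: ('v,'k) mpoly set) \<subseteq> (\<lambda>A. MS X (hasA X A)) ` {A. A \<subseteq> X \<and> AssC X M A}"
  proof
    fix P :: "('v,'k) mpoly set"
    assume "P \<in> Ass (polys_in X) (MS X M)"
    then obtain g where prime: "is_prime_in (polys_in X) P" and gS: "g \<in> polys_in X"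
      and Pg: "P = {f \<in> polys_in X. f * g \<in> MS X M}"
      unfolding Ass_def by blast
    have Ag: "Ann X M g = P" unfolding Ann_def Pg ..
    note PI = P_ideal'[OF prime]
    define A where "A = {a \<in> X. var a \<in> P}"
    have monP: "Poly_Mapping.single \<tau> 1 \<in> P \<longleftrightarrow> hasA X A \<tau>" if kt: "Poly_Mapping.keys \<tau> \<subseteq> X" for \<tau>
    proof
      assume "Poly_Mapping.single \<tau> 1 \<in> P"
      then obtain a where "a \<in> Poly_Mapping.keys \<tau>" "var a \<in> P"
        using mon_var_in_P[OF prime _ kt] by blast
      moreover then have "a \<in> X" using kt by blast
      ultimately show "hasA X A \<tau>" unfolding hasA_def A_def using kt by (auto simp: in_keys_iff)
    next
      assume "hasA X A \<tau>"
      then obtain a where "a \<in> A" "0 < Poly_Mapping.lookup \<tau> a" unfolding hasA_def by blast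
      moreover from \<open>a \<in> A\<close> have "var a \<in> P" unfolding A_def by blast
      ultimately show "Poly_Mapping.single \<tau> 1 \<in> P"
        by (intro mon_by_var[OF PI kt])
    qed
    have PA: "P = MS X (hasA X A)"
    proof (rule set_eqI)
      fix f :: "('v,'k) mpoly"
      show "f \<in> P \<longleftrightarrow> f \<in> MS X (hasA X A)"
      proof
        assume fP: "f \<in> P"
        have fS: "f \<in> polys_in X" by (rule id_sub[OF PI fP])
        have "hasA X A \<tau>" if "\<tau> \<in> Poly_Mapping.keys f" for \<tau>
        proof -
          have "Poly_Mapping.single \<tau> 1 \<in> P" by (rule mon_in_P[OF finX up prime gS Ag fP that])
          moreover have "Poly_Mapping.keys \<tau> \<subseteq> X" using fS that by (simp add: polys_in_iff)
          ultimately show ?thesis using monP by blast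
        qed
        then show "f \<in> MS X (hasA X A)" using fS by (simp add: MS_iff)
      next
        assume f: "f \<in> MS X (hasA X A)"
        then have fS: "f \<in> polys_in X" by (simp add: MS_iff)
        show "f \<in> P"
        proof (rule in_ideal_by_mons[OF PI fS])
          fix \<tau> assume t: "\<tau> \<in> Poly_Mapping.keys f"
          then have "hasA X A \<tau>" using f by (simp add: MS_iff)
          moreover have "Poly_Mapping.keys \<tau> \<subseteq> X" using fS t by (simp add: polys_in_iff)
          ultimately show "Poly_Mapping.single \<tau> 1 \<in> P" using monP by blast
        qed
      qed
    qed
    have "\<exists>\<kappa>\<in>Poly_Mapping.keys g. Ann X M (Poly_Mapping.single \<kappa> 1) \<subseteq> P"
    proof (rule ccontr)
      assume "\<not> (\<exists>\<kappa>\<in>Poly_Mapping.keys g. Ann X M (Poly_Mapping.single \<kappa> 1) \<subseteq> P)"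
      then have "\<forall>\<kappa>\<in>Poly_Mapping.keys g. \<exists>h. h \<in> Ann X M (Poly_Mapping.single \<kappa> 1) \<and> h \<notin> P" by blast
      then obtain h where h: "\<And>\<kappa>. \<kappa> \<in> Poly_Mapping.keys g \<Longrightarrow> h \<kappa> \<in> Ann X M (Poly_Mapping.single \<kappa> 1) \<and> h \<kappa> \<notin> P"
        by metis
      define H where "H = (\<Prod>\<kappa>\<in>Poly_Mapping.keys g. h \<kappa>)"
      have hS: "h \<kappa> \<in> polys_in X" if "\<kappa> \<in> Poly_Mapping.keys g" for \<kappa>
        using h[OF that] unfolding Ann_def by blast
      have HS: "H \<in> polys_in X" unfolding H_def by (rule polys_prod[OF hS])
      have HnP: "H \<notin> P"
      proof
        assume "H \<in> P"
        then have HP: "(\<Prod>\<kappa>\<in>Poly_Mapping.keys g. h \<kappa>) \<in> P" unfolding H_def .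
        have "\<exists>\<kappa>\<in>Poly_Mapping.keys g. h \<kappa> \<in> P"
          by (rule prime_prod[OF prime finite_keys[of g] hS HP])
        then obtain \<kappa> where "\<kappa> \<in> Poly_Mapping.keys g" "h \<kappa> \<in> P" by blast
        then show False using h by blast
      qed
      have HI: "H * Poly_Mapping.single \<kappa> 1 \<in> MS X M" if k: "\<kappa> \<in> Poly_Mapping.keys g" for \<kappa>
      proof -
        have "H = h \<kappa> * (\<Prod>\<kappa>'\<in>Poly_Mapping.keys g - {\<kappa>}. h \<kappa>')"
          unfolding H_def by (rule prod.remove[OF finite_keys k])
        then have "H * Poly_Mapping.single \<kappa> 1 = (\<Prod>\<kappa>'\<in>Poly_Mapping.keys g - {\<kappa>}. h \<kappa>') * (h \<kappa> * Poly_Mapping.single \<kappa> 1)"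
          by (simp add: algebra_simps)
        moreover have "(\<Prod>\<kappa>'\<in>Poly_Mapping.keys g - {\<kappa>}. h \<kappa>') \<in> polys_in X"
          by (rule polys_prod) (simp add: hS)
        moreover have "h \<kappa> * Poly_Mapping.single \<kappa> 1 \<in> MS X M" using h[OF k] unfolding Ann_def by blast
        ultimately show ?thesis using id_mult[OF MS_ideal[OF up]] by simp
      qed
      have "H * g \<in> MS X M"
      proof -
        have "H * g = H * (\<Sum>\<kappa>\<in>Poly_Mapping.keys g. Poly_Mapping.single \<kappa> (Poly_Mapping.lookup g \<kappa>))"
          by (subst poly_expand[of g]) (rule refl)
        also have "\<dots> = (\<Sum>\<kappa>\<in>Poly_Mapping.keys g. Poly_Mapping.single 0 (Poly_Mapping.lookup g \<kappa>) * (H * Poly_Mapping.single \<kappa> 1))"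
          by (simp add: sum_distrib_left mult_single algebra_simps)
        also have "\<dots> \<in> MS X M"
          by (rule id_sum[OF MS_ideal[OF up]], rule id_mult[OF MS_ideal[OF up] polys_single0 HI])
        finally show ?thesis .
      qed
      then have "H \<in> P" using HS unfolding Pg by blast
      then show False using HnP by blast
    qed
    then obtain \<kappa> where kg: "\<kappa> \<in> Poly_Mapping.keys g" and AnnP: "Ann X M (Poly_Mapping.single \<kappa> 1) \<subseteq> P"
      by blast
    have kX: "Poly_Mapping.keys \<kappa> \<subseteq> X" using gS kg by (simp add: polys_in_iff)
    have PAnn: "P \<subseteq> Ann X M (Poly_Mapping.single \<kappa> 1)"
    proof
      fix f assume fP: "f \<in> P"
      have fS: "f \<in> polys_in X" by (rule id_sub[OF PI fP])
      have "M (\<tau> + \<kappa>)" if t: "\<tau> \<in> Poly_Mapping.keys f" for \<tau>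
      proof -
        have tX: "Poly_Mapping.keys \<tau> \<subseteq> X" using fS t by (simp add: polys_in_iff)
        have "Poly_Mapping.single \<tau> 1 \<in> P" by (rule mon_in_P[OF finX up prime gS Ag fP t])
        then have "Poly_Mapping.single \<tau> 1 * g \<in> MS X M" using Pg by blast
        then have "g * Poly_Mapping.single \<tau> 1 \<in> MS X M" by (simp add: mult.commute)
        then have "\<forall>\<sigma>\<in>Poly_Mapping.keys g. M (\<sigma> + \<tau>)" using mult_mon_MS[OF tX gS] by blast
        then show ?thesis using kg by (simp add: add.commute)
      qed
      then have "f * Poly_Mapping.single \<kappa> 1 \<in> MS X M" using mult_mon_MS[OF kX fS] by blast
      then show "f \<in> Ann X M (Poly_Mapping.single \<kappa> 1)" using fS unfolding Ann_def by blast
    qed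
    have AnnEq: "Ann X M (Poly_Mapping.single \<kappa> 1) = P" using AnnP PAnn by blast
    have "AssC X M A"
      unfolding AssC_def
    proof (intro exI conjI allI impI)
      show "Poly_Mapping.keys \<kappa> \<subseteq> X" by (rule kX)
      show "\<not> M \<kappa>"
      proof
        assume "M \<kappa>"
        then have "1 * Poly_Mapping.single \<kappa> 1 \<in> MS X M" using kX by (simp add: MS_iff polys_single)
        then have "(1::('v,'k) mpoly) \<in> Ann X M (Poly_Mapping.single \<kappa> 1)" unfolding Ann_def by simp
        then have "(1::('v,'k) mpoly) \<in> P" using AnnEq by simp
        then show False using one_notin'[OF prime] by blast
      qed
      fix \<nu> :: "'v \<Rightarrow>\<^sub>0 nat" assume nX: "Poly_Mapping.keys \<nu> \<subseteq> X"
      have nS: "Poly_Mapping.single \<nu> (1::'k) \<in> polys_in X" by (rule polys_single[OF nX])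
      have i1: "Poly_Mapping.single \<nu> (1::'k) * Poly_Mapping.single \<kappa> 1 \<in> MS X M \<longleftrightarrow> M (\<nu> + \<kappa>)"
        using mult_mon_MS[where M=M, OF kX nS] by simp
      have i2: "Poly_Mapping.single \<nu> (1::'k) * Poly_Mapping.single \<kappa> 1 \<in> MS X M \<longleftrightarrow> Poly_Mapping.single \<nu> 1 \<in> P"
      proof -
        have "Poly_Mapping.single \<nu> (1::'k) \<in> Ann X M (Poly_Mapping.single \<kappa> 1) \<longleftrightarrow>
            Poly_Mapping.single \<nu> (1::'k) * Poly_Mapping.single \<kappa> 1 \<in> MS X M"
          unfolding Ann_def using nS by simp
        then show ?thesis using AnnEq by simp
      qed
      have i3: "Poly_Mapping.single \<nu> 1 \<in> P \<longleftrightarrow> (\<exists>a\<in>A. 0 < Poly_Mapping.lookup \<nu> a)"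
        using monP[OF nX] nX by (simp add: hasA_def)
      show "M (\<kappa> + \<nu>) \<longleftrightarrow> (\<exists>a\<in>A. 0 < Poly_Mapping.lookup \<nu> a)"
        using i1 i2 i3 by (simp add: add.commute)
    qed
    moreover have "A \<subseteq> X" unfolding A_def by blast
    ultimately show "P \<in> (\<lambda>A. MS X (hasA X A)) ` {A. A \<subseteq> X \<and> AssC X M A}"
      using PA by blast
  qed
next
  show "(\<lambda>A. MS X (hasA X A)) ` {A. A \<subseteq> X \<and> AssC X M A} \<subseteq> Ass (polys_in X) (MS X M :: ('v,'k) mpoly set)"
  proof
    fix P :: "('v,'k) mpoly set"
    assume "P \<in> (\<lambda>A. MS X (hasA X A)) ` {A. A \<subseteq> X \<and> AssC X M A}"
    then obtain A where A: "A \<subseteq> X" "AssC X M A" and PA: "P = MS X (hasA X A)" by blast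
    from A(2) obtain \<mu> where mX: "Poly_Mapping.keys \<mu> \<subseteq> X" and nM: "\<not> M \<mu>"
      and eq: "\<And>\<nu>. Poly_Mapping.keys \<nu> \<subseteq> X \<Longrightarrow> M (\<mu> + \<nu>) \<longleftrightarrow> (\<exists>a\<in>A. 0 < Poly_Mapping.lookup \<nu> a)"
      unfolding AssC_def by blast
    have "P = {f \<in> polys_in X. f * Poly_Mapping.single \<mu> 1 \<in> MS X M}"
    proof (rule set_eqI)
      fix f :: "('v,'k) mpoly"
      show "f \<in> P \<longleftrightarrow> f \<in> {f \<in> polys_in X. f * Poly_Mapping.single \<mu> 1 \<in> MS X M}"
      proof (cases "f \<in> polys_in X")
        case False
        then show ?thesis unfolding PA by (simp add: MS_iff)
      next
        case fS: True
        have "f * Poly_Mapping.single \<mu> 1 \<in> MS X M \<longleftrightarrow> (\<forall>\<tau>\<in>Poly_Mapping.keys f. M (\<tau> + \<mu>))"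
          by (rule mult_mon_MS[OF mX fS])
        also have "\<dots> \<longleftrightarrow> (\<forall>\<tau>\<in>Poly_Mapping.keys f. hasA X A \<tau>)"
        proof (rule ball_cong[OF refl])
          fix \<tau> assume "\<tau> \<in> Poly_Mapping.keys f"
          then have tX: "Poly_Mapping.keys \<tau> \<subseteq> X" using fS by (simp add: polys_in_iff)
          have "M (\<tau> + \<mu>) \<longleftrightarrow> M (\<mu> + \<tau>)" by (simp add: add.commute)
          also have "\<dots> \<longleftrightarrow> (\<exists>a\<in>A. 0 < Poly_Mapping.lookup \<tau> a)" by (rule eq[OF tX])
          finally show "M (\<tau> + \<mu>) \<longleftrightarrow> hasA X A \<tau>" using tX by (simp add: hasA_def)
        qed
        finally show ?thesis unfolding PA using fS by (simp add: MS_iff)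
      qed
    qed
    moreover have "Poly_Mapping.single \<mu> 1 \<in> polys_in X" by (rule polys_single[OF mX])
    moreover have "is_prime_in (polys_in X) P" unfolding PA by (rule hasA_prime[OF finX])
    ultimately show "P \<in> Ass (polys_in X) (MS X M)" unfolding Ass_def by blast
  qed
qed



locale hyp =
  fixes VG W :: "'v set" and EG :: "'v set set" and v :: 'v
  assumes sG: "simple_hypergraph VG EG"
    and fW: "finite W" and Wne: "W \<noteq> {}" and disj: "W \<inter> VG = {}"
    and vG: "v \<in> VG"
    and sH: "simple_hypergraph (VG \<union> W) (EG \<union> {insert v W})"
begin

definition cH :: "('v \<Rightarrow> nat) \<Rightarrow> nat" where
  "cH m = m v + sum m W"

lemma finVG: "finite VG"
  using sG unfolding simple_hypergraph_def by blast

lemma edgeG: "e \<in> EG \<Longrightarrow> e \<subseteq> VG"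
  using sG unfolding simple_hypergraph_def by blast

lemma vW: "v \<notin> W"
  using vG disj by blast

lemma WnVG: "w \<in> W \<Longrightarrow> w \<notin> VG"
  using disj by blast

lemma cnt_out: "(\<forall>k<n. D k \<subseteq> VG) \<Longrightarrow> i \<notin> VG \<Longrightarrow> cnt D n i = 0"
  unfolding cnt_def by (auto simp: card_eq_0_iff)

lemma covG_mono: "covpow VG EG n m \<Longrightarrow> (\<And>i. i \<in> VG \<Longrightarrow> m i \<le> m' i) \<Longrightarrow> covpow VG EG n m'"
proof -
  assume a: "covpow VG EG n m" and b: "\<And>i. i \<in> VG \<Longrightarrow> m i \<le> m' i"
  from a obtain D where D: "\<forall>k<n. vertex_cover VG EG (D k)" "\<forall>i. cnt D n i \<le> m i"
    unfolding covpow_def by blast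
  have DV: "\<forall>k<n. D k \<subseteq> VG" using D(1) vc_sub by blast
  have "\<forall>i. cnt D n i \<le> m' i"
  proof
    fix i show "cnt D n i \<le> m' i"
    proof (cases "i \<in> VG")
      case True then show ?thesis using D(2)[rule_format, of i] b[OF True] by linarith
    next
      case False then show ?thesis using cnt_out[OF DV False] by simp
    qed
  qed
  then show ?thesis unfolding covpow_def using D(1) by blast
qed

lemma crit_fwd:
  assumes "covpow (VG \<union> W) (EG \<union> {insert v W}) n m"
  shows "covpow VG EG n m \<and> n \<le> cH m"
proof -
  from assms obtain C where C: "\<forall>k<n. vertex_cover (VG \<union> W) (EG \<union> {insert v W}) (C k)"
    "\<forall>i. cnt C n i \<le> m i" unfolding covpow_def by blast
  define D where "D k = C k \<inter> VG" for k
  have Dc: "vertex_cover VG EG (D k)" if "k < n" for k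
  proof -
    have "vertex_cover (VG \<union> W) (EG \<union> {insert v W}) (C k)" using C(1) that by blast
    then have "\<forall>e\<in>EG. C k \<inter> e \<noteq> {}" unfolding vertex_cover_def by blast
    then have "\<forall>e\<in>EG. D k \<inter> e \<noteq> {}" unfolding D_def using edgeG by blast
    then show ?thesis unfolding vertex_cover_def D_def by blast
  qed
  have "cnt D n i \<le> m i" for i
  proof -
    have "cnt D n i \<le> cnt C n i" unfolding cnt_def D_def by (rule card_mono) auto
    then show ?thesis using C(2)[rule_format, of i] by linarith
  qed
  then have g: "covpow VG EG n m" unfolding covpow_def using Dc by blast
  have "{k. k < n} \<subseteq> (\<Union>i\<in>insert v W. {k. k < n \<and> i \<in> C k})"
  proof
    fix k assume "k \<in> {k. k < n}"
    then have "vertex_cover (VG \<union> W) (EG \<union> {insert v W}) (C k)" using C(1) by blast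
    then have "C k \<inter> insert v W \<noteq> {}" unfolding vertex_cover_def by blast
    then show "k \<in> (\<Union>i\<in>insert v W. {k. k < n \<and> i \<in> C k})" using \<open>k \<in> {k. k < n}\<close> by blast
  qed
  then have "card {k. k < n} \<le> card (\<Union>i\<in>insert v W. {k. k < n \<and> i \<in> C k})"
    by (rule card_mono[rotated]) (simp add: fW)
  also have "\<dots> \<le> (\<Sum>i\<in>insert v W. card {k. k < n \<and> i \<in> C k})"
    by (rule card_UN_le) (simp add: fW)
  also have "\<dots> = (\<Sum>i\<in>insert v W. cnt C n i)" unfolding cnt_def ..
  also have "\<dots> \<le> (\<Sum>i\<in>insert v W. m i)" by (rule sum_mono) (use C(2) in blast)
  also have "\<dots> = cH m" unfolding cH_def using fW vW by simp
  finally have "n \<le> cH m" by simp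
  then show ?thesis using g by blast
qed

lemma step_exists:
  assumes D: "\<forall>k<Suc n. vertex_cover VG EG (D k)" "\<forall>i. cnt D (Suc n) i \<le> m i"
    and c: "Suc n \<le> cH m"
  shows "\<exists>Cn. vertex_cover (VG \<union> W) (EG \<union> {insert v W}) Cn \<and> (\<forall>i. (if i \<in> Cn then 1 else 0) \<le> m i)
     \<and> covpow VG EG n (\<lambda>i. m i - (if i \<in> Cn then 1 else 0))
     \<and> n \<le> cH (\<lambda>i. m i - (if i \<in> Cn then 1 else 0))"
proof -
  have DV: "\<forall>k<Suc n. D k \<subseteq> VG" using D(1) vc_sub by blast
  have DnV: "D n \<subseteq> VG" using DV by simp
  have Dnc: "vertex_cover VG EG (D n)" using D(1) by simp
  have DnE: "\<forall>e\<in>EG. D n \<inter> e \<noteq> {}" using Dnc unfolding vertex_cover_def by blast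
  have cS: "cnt D n i + (if i \<in> D n then 1 else 0) \<le> m i" for i
    using D(2)[rule_format, of i] by (simp add: cnt_Suc)
  have cn_le: "cnt D n i \<le> n" for i by (rule cnt_le)
  have posD: "0 < m i" if "i \<in> D n" for i using cS[of i] that by simp
  have cout: "i \<notin> VG \<Longrightarrow> cnt D n i = 0" for i
    using cnt_out[of n D i] DV by simp
  have Dcov: "\<forall>k<n. vertex_cover VG EG (D k)" using D(1) by simp
  have recipe: "\<exists>Cn. vertex_cover (VG \<union> W) (EG \<union> {insert v W}) Cn \<and> (\<forall>i. (if i \<in> Cn then 1 else 0) \<le> m i)
     \<and> covpow VG EG n (\<lambda>i. m i - (if i \<in> Cn then 1 else 0))
     \<and> n \<le> cH (\<lambda>i. m i - (if i \<in> Cn then 1 else 0))"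
    if Cn: "D n \<subseteq> Cn" "Cn \<subseteq> VG \<union> W" "Cn \<inter> insert v W \<noteq> {}"
      and pos: "\<forall>i\<in>Cn. 0 < m i"
      and extra: "\<forall>i\<in>Cn - D n. cnt D n i < m i"
      and cc: "n \<le> cH (\<lambda>i. m i - (if i \<in> Cn then 1 else 0))"
    for Cn
  proof (intro exI conjI)
    show "vertex_cover (VG \<union> W) (EG \<union> {insert v W}) Cn"
      unfolding vertex_cover_def using Cn DnE by blast
    show "\<forall>i. (if i \<in> Cn then 1 else 0) \<le> m i" using pos by (simp add: Suc_le_eq)
    show "covpow VG EG n (\<lambda>i. m i - (if i \<in> Cn then 1 else 0))"
      unfolding covpow_def
    proof (intro exI[of _ D] conjI allI impI)
      show "\<And>k. k < n \<Longrightarrow> vertex_cover VG EG (D k)" using Dcov by blast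
      fix i
      show "cnt D n i \<le> m i - (if i \<in> Cn then 1 else 0)"
      proof (cases "i \<in> D n")
        case True then show ?thesis using cS[of i] Cn(1) by auto
      next
        case False
        show ?thesis
        proof (cases "i \<in> Cn")
          case True
          have "cnt D n i < m i" using extra False True by blast
          then show ?thesis using True by simp
        next
          case F2: False then show ?thesis using cS[of i] by simp
        qed
      qed
    qed
    show "n \<le> cH (\<lambda>i. m i - (if i \<in> Cn then 1 else 0))" by (rule cc)
  qed
  show ?thesis
  proof (cases "v \<in> D n")
    case True
    have mv: "0 < m v" using cS[of v] True by simp
    have sW: "sum (\<lambda>i. m i - (if i \<in> D n then 1 else 0)) W = sum m W"
      by (rule sum.cong[OF refl]) (use DnV WnVG in auto)
    have "n \<le> cH (\<lambda>i. m i - (if i \<in> D n then 1 else 0))"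
      using c mv True unfolding cH_def sW by simp
    then show ?thesis
      using cS DnV vG True posD by (intro recipe) auto
  next
    case vn: False
    show ?thesis
    proof (cases "\<exists>w\<in>W. 0 < m w")
      case True
      then obtain w where w: "w \<in> W" "0 < m w" by blast
      have wD: "w \<notin> D n" using w(1) DnV WnVG by blast
      have vw: "v \<noteq> w" using w(1) vW by blast
      let ?m' = "\<lambda>i. m i - (if i \<in> insert w (D n) then 1 else 0)"
      have s1: "sum m W = m w + sum m (W - {w})" by (rule sum.remove[OF fW w(1)])
      have s2: "sum ?m' W = ?m' w + sum ?m' (W - {w})" by (rule sum.remove[OF fW w(1)])
      have s3: "sum ?m' (W - {w}) = sum m (W - {w})"
        by (rule sum.cong[OF refl]) (use DnV WnVG in auto)
      have "cH ?m' = m v + (m w - 1) + sum m (W - {w})"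
        unfolding cH_def s2 s3 using vn vw by simp
      then have "n \<le> cH ?m'" using c w(2) unfolding cH_def s1 by simp
      moreover have "\<forall>i\<in>insert w (D n). 0 < m i" using posD w(2) by blast
      moreover have "\<forall>i\<in>insert w (D n) - D n. cnt D n i < m i"
        using cout[of w] WnVG[OF w(1)] w(2) by auto
      moreover have "insert w (D n) \<subseteq> VG \<union> W" using DnV w(1) by blast
      moreover have "insert w (D n) \<inter> insert v W \<noteq> {}" using w(1) by blast
      ultimately show ?thesis by (intro recipe) auto
    next
      case False
      then have z: "\<forall>w\<in>W. m w = 0" by auto
      have sW: "sum m W = 0" using z by simp
      have mv: "Suc n \<le> m v" using c unfolding cH_def sW by simp
      let ?m' = "\<lambda>i. m i - (if i \<in> insert v (D n) then 1 else 0)"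
      have "n \<le> ?m' v" using mv by simp
      then have "n \<le> cH ?m'" unfolding cH_def by simp
      moreover have "\<forall>i\<in>insert v (D n). 0 < m i" using posD mv by auto
      moreover have "\<forall>i\<in>insert v (D n) - D n. cnt D n i < m i"
        using cn_le[of v] mv vn by auto
      moreover have "insert v (D n) \<subseteq> VG \<union> W" using DnV vG by blast
      moreover have "insert v (D n) \<inter> insert v W \<noteq> {}" by blast
      ultimately show ?thesis by (intro recipe) auto
    qed
  qed
qed

lemma crit_back:
  "covpow VG EG n m \<Longrightarrow> n \<le> cH m \<Longrightarrow> covpow (VG \<union> W) (EG \<union> {insert v W}) n m"
proof (induction n arbitrary: m)
  case 0
  then show ?case by simp
next
  case (Suc n)
  from Suc.prems(1) obtain D where D: "\<forall>k<Suc n. vertex_cover VG EG (D k)" "\<forall>i. cnt D (Suc n) i \<le> m i"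
    unfolding covpow_def by blast
  from step_exists[OF D Suc.prems(2)] obtain Cn where
    Cn: "vertex_cover (VG \<union> W) (EG \<union> {insert v W}) Cn" "\<forall>i. (if i \<in> Cn then 1 else 0) \<le> m i"
      "covpow VG EG n (\<lambda>i. m i - (if i \<in> Cn then 1 else 0))"
      "n \<le> cH (\<lambda>i. m i - (if i \<in> Cn then 1 else 0))" by blast
  from Suc.IH[OF Cn(3) Cn(4)] obtain C where
    C: "\<forall>k<n. vertex_cover (VG \<union> W) (EG \<union> {insert v W}) (C k)"
      "\<forall>i. cnt C n i \<le> m i - (if i \<in> Cn then 1 else 0)"
    unfolding covpow_def by blast
  show ?case
    unfolding covpow_def
  proof (intro exI[of _ "C(n := Cn)"] conjI allI impI)
    fix k assume "k < Suc n"
    then show "vertex_cover (VG \<union> W) (EG \<union> {insert v W}) ((C(n := Cn)) k)"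
      using C(1) Cn(1) by (cases "k = n") auto
  next
    fix i
    have "cnt (C(n := Cn)) (Suc n) i = cnt C n i + (if i \<in> Cn then 1 else 0)"
      by (simp add: cnt_Suc cnt_upd)
    then show "cnt (C(n := Cn)) (Suc n) i \<le> m i"
      using C(2)[rule_format, of i] Cn(2)[rule_format, of i] by linarith
  qed
qed

lemma crit: "covpow (VG \<union> W) (EG \<union> {insert v W}) n m \<longleftrightarrow> covpow VG EG n m \<and> n \<le> cH m"
  using crit_fwd crit_back by blast


lemma noedge: "e \<in> EG \<Longrightarrow> \<exists>x\<in>e. x \<noteq> v"
proof (rule ccontr)
  assume e: "e \<in> EG" and "\<not> (\<exists>x\<in>e. x \<noteq> v)"
  then have "e \<subseteq> insert v W" by blast
  moreover have "e \<in> EG \<union> {insert v W}" "insert v W \<in> EG \<union> {insert v W}" using e by auto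
  ultimately have "e = insert v W" using sH unfolding simple_hypergraph_def by blast
  then have "W \<subseteq> VG" using edgeG[OF e] by blast
  then show False using Wne disj by blast
qed

lemma covG_eq: "(\<And>i. i \<in> VG \<Longrightarrow> m i = m' i) \<Longrightarrow> covpow VG EG n m \<longleftrightarrow> covpow VG EG n m'"
  using covG_mono[of n m m'] covG_mono[of n m' m] by fastforce

lemma cH_add: "cH (Poly_Mapping.lookup (\<mu> + \<nu>)) = cH (Poly_Mapping.lookup \<mu>) + cH (Poly_Mapping.lookup \<nu>)"
  unfolding cH_def by (simp add: lookup_add sum.distrib)

lemma cH_single: "cH (Poly_Mapping.lookup (Poly_Mapping.single a k)) = (if a = v then k else 0) + (if a \<in> W then k else 0)"
proof -
  have "sum (Poly_Mapping.lookup (Poly_Mapping.single a k)) W = sum (\<lambda>i. if i = a then k else 0) W"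
    by (rule sum.cong[OF refl]) (simp add: lookup_single when_def eq_commute)
  also have "\<dots> = (if a \<in> W then k else 0)" using fW by (simp add: sum.delta')
  finally show ?thesis unfolding cH_def by (simp add: lookup_single when_def eq_commute)
qed

lemma lookup_single_if: "Poly_Mapping.lookup (Poly_Mapping.single a k) i = (if i = a then k else 0)"
  by (simp add: lookup_single when_def eq_commute)

abbreviation "rv \<mu> \<equiv> prestr (\<lambda>i. i \<in> VG) \<mu>"

lemma keys_rv: "Poly_Mapping.keys (rv \<mu>) \<subseteq> VG"
  by (auto simp: keys_prestr)

lemma lookup_rv: "Poly_Mapping.lookup (rv \<mu>) i = (if i \<in> VG then Poly_Mapping.lookup \<mu> i else 0)"
  by (rule lookup_prestr)

lemma CPH: "CP (VG \<union> W) (EG \<union> {insert v W}) s \<mu> \<longleftrightarrow>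
   Poly_Mapping.keys \<mu> \<subseteq> VG \<union> W \<and> covpow VG EG s (Poly_Mapping.lookup \<mu>) \<and> s \<le> cH (Poly_Mapping.lookup \<mu>)"
  unfolding CP_def crit by blast

lemma CPG: "CP VG EG s \<mu> \<longleftrightarrow> Poly_Mapping.keys \<mu> \<subseteq> VG \<and> covpow VG EG s (Poly_Mapping.lookup \<mu>)"
  unfolding CP_def by blast

lemma covG_add_mono: "covpow VG EG s (Poly_Mapping.lookup \<mu>) \<Longrightarrow> covpow VG EG s (Poly_Mapping.lookup (\<mu> + \<nu>))"
  by (erule covG_mono) (simp add: lookup_add)

lemma sum_pos_iff: "0 < sum (Poly_Mapping.lookup (\<nu>::'v \<Rightarrow>\<^sub>0 nat)) W \<longleftrightarrow> (\<exists>w\<in>W. 0 < Poly_Mapping.lookup \<nu> w)"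
proof -
  have "sum (Poly_Mapping.lookup \<nu>) W = 0 \<longleftrightarrow> (\<forall>w\<in>W. Poly_Mapping.lookup \<nu> w = 0)"
    using fW by simp
  then show ?thesis by auto
qed

lemma assc_fwd:
  assumes AX: "A \<subseteq> VG \<union> W" and AC: "AssC (VG \<union> W) (CP (VG \<union> W) (EG \<union> {insert v W}) s) A"
  shows "(A \<subseteq> VG \<and> AssC VG (CP VG EG s) A) \<or> A = insert v W"
proof -
  let ?MH = "CP (VG \<union> W) (EG \<union> {insert v W}) s"
  let ?Q = "\<lambda>\<mu>. covpow VG EG s (Poly_Mapping.lookup \<mu>)"
  from AC obtain \<mu> where k\<mu>: "Poly_Mapping.keys \<mu> \<subseteq> VG \<union> W" and nM: "\<not> ?MH \<mu>"
    and eq: "\<And>\<nu>. Poly_Mapping.keys \<nu> \<subseteq> VG \<union> W \<Longrightarrow> ?MH (\<mu> + \<nu>) \<longleftrightarrow> (\<exists>a\<in>A. 0 < Poly_Mapping.lookup \<nu> a)"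
    unfolding AssC_def by blast
  show ?thesis
  proof (cases "?Q \<mu>")
    case False
    obtain w1 where w1: "w1 \<in> W" using Wne by blast
    have agreeQ: "?Q \<mu>' \<longleftrightarrow> ?Q \<mu>''" if "\<And>i. i \<in> VG \<Longrightarrow> Poly_Mapping.lookup \<mu>' i = Poly_Mapping.lookup \<mu>'' i" for \<mu>' \<mu>''
      using covG_eq[of "Poly_Mapping.lookup \<mu>'" "Poly_Mapping.lookup \<mu>''" s] that by blast
    have wA: "w \<notin> A" if w: "w \<in> W" for w
    proof
      assume "w \<in> A"
      have kw: "Poly_Mapping.keys (Poly_Mapping.single w (1::nat)) \<subseteq> VG \<union> W" using w by simp
      have "\<exists>a\<in>A. 0 < Poly_Mapping.lookup (Poly_Mapping.single w (1::nat)) a"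
        using \<open>w \<in> A\<close> by (intro bexI[of _ w]) simp_all
      then have "?MH (\<mu> + Poly_Mapping.single w 1)" using eq[OF kw] by blast
      then have "?Q (\<mu> + Poly_Mapping.single w 1)" unfolding CPH by blast
      moreover have "?Q (\<mu> + Poly_Mapping.single w 1) \<longleftrightarrow> ?Q \<mu>"
        by (rule agreeQ) (use w WnVG in \<open>auto simp: lookup_add lookup_single_if\<close>)
      ultimately show False using False by blast
    qed
    have AVG: "A \<subseteq> VG" using AX wA by blast
    have w1A: "w1 \<notin> A" using wA[OF w1] .
    have "AssC VG (CP VG EG s) A"
      unfolding AssC_def
    proof (intro exI[of _ "rv \<mu>"] conjI allI impI)
      show "Poly_Mapping.keys (rv \<mu>) \<subseteq> VG" by (rule keys_rv)
      have qr: "?Q (rv \<mu>) \<longleftrightarrow> ?Q \<mu>" by (rule agreeQ) (simp add: lookup_rv)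
      show "\<not> CP VG EG s (rv \<mu>)" unfolding CPG using qr False by blast
      fix \<nu> :: "'v \<Rightarrow>\<^sub>0 nat" assume k\<nu>: "Poly_Mapping.keys \<nu> \<subseteq> VG"
      define \<nu>0 where "\<nu>0 = Poly_Mapping.single w1 s"
      have k: "Poly_Mapping.keys (\<nu> + \<nu>0) \<subseteq> VG \<union> W" using k\<nu> w1 unfolding \<nu>0_def by (auto simp: keys_add_nat)
      have c: "s \<le> cH (Poly_Mapping.lookup (\<mu> + (\<nu> + \<nu>0)))"
        unfolding cH_add \<nu>0_def cH_single using w1 vW by auto
      have "?MH (\<mu> + (\<nu> + \<nu>0)) \<longleftrightarrow> ?Q (\<mu> + (\<nu> + \<nu>0))"
        unfolding CPH using k k\<mu> c by (auto simp: keys_add_nat)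
      also have "\<dots> \<longleftrightarrow> ?Q (rv \<mu> + \<nu>)"
        by (rule agreeQ) (use w1 WnVG in \<open>auto simp: lookup_add lookup_rv \<nu>0_def lookup_single_if\<close>)
      also have "\<dots> \<longleftrightarrow> CP VG EG s (rv \<mu> + \<nu>)"
        unfolding CPG using keys_rv[of \<mu>] k\<nu> by (auto simp: keys_add_nat)
      finally have e1: "CP VG EG s (rv \<mu> + \<nu>) \<longleftrightarrow> (\<exists>a\<in>A. 0 < Poly_Mapping.lookup (\<nu> + \<nu>0) a)"
        using eq[OF k] by simp
      have "(\<exists>a\<in>A. 0 < Poly_Mapping.lookup (\<nu> + \<nu>0) a) \<longleftrightarrow> (\<exists>a\<in>A. 0 < Poly_Mapping.lookup \<nu> a)"
        using w1A unfolding \<nu>0_def by (auto simp: lookup_add lookup_single_if)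
      then show "CP VG EG s (rv \<mu> + \<nu>) \<longleftrightarrow> (\<exists>a\<in>A. 0 < Poly_Mapping.lookup \<nu> a)" using e1 by simp
    qed
    then show ?thesis using AVG by blast
  next
    case True
    have lt: "cH (Poly_Mapping.lookup \<mu>) < s" using nM True k\<mu> unfolding CPH by auto
    define r where "r = s - cH (Poly_Mapping.lookup \<mu>)"
    have r0: "0 < r" using lt unfolding r_def by simp
    have key: "(\<exists>a\<in>A. 0 < Poly_Mapping.lookup \<nu> a) \<longleftrightarrow> r \<le> cH (Poly_Mapping.lookup \<nu>)"
      if k\<nu>: "Poly_Mapping.keys \<nu> \<subseteq> VG \<union> W" for \<nu>
    proof -
      have "?MH (\<mu> + \<nu>) \<longleftrightarrow> s \<le> cH (Poly_Mapping.lookup (\<mu> + \<nu>))"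
        unfolding CPH using k\<mu> k\<nu> covG_add_mono[OF True] by (auto simp: keys_add_nat)
      also have "\<dots> \<longleftrightarrow> r \<le> cH (Poly_Mapping.lookup \<nu>)" unfolding cH_add r_def using lt by auto
      finally show ?thesis using eq[OF k\<nu>] by simp
    qed
    have kv: "Poly_Mapping.keys (Poly_Mapping.single v k) \<subseteq> VG \<union> W" for k :: nat using vG by simp
    have cv: "cH (Poly_Mapping.lookup (Poly_Mapping.single v k)) = k" for k using vW by (simp add: cH_single)
    have "\<exists>a\<in>A. 0 < Poly_Mapping.lookup (Poly_Mapping.single v r) a" using key[OF kv] cv by simp
    then have vA: "v \<in> A" using r0 by (auto simp: lookup_single_if split: if_splits)
    have "\<exists>a\<in>A. 0 < Poly_Mapping.lookup (Poly_Mapping.single v (1::nat)) a"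
      using vA by (intro bexI[of _ v]) simp_all
    then have r1: "r = 1" using key[OF kv] cv r0 by simp
    have "a \<in> A \<longleftrightarrow> a \<in> insert v W" if aX: "a \<in> VG \<union> W" for a
    proof -
      have ka: "Poly_Mapping.keys (Poly_Mapping.single a (1::nat)) \<subseteq> VG \<union> W" using aX by simp
      have "a \<in> A \<longleftrightarrow> (\<exists>b\<in>A. 0 < Poly_Mapping.lookup (Poly_Mapping.single a (1::nat)) b)"
        by (auto simp: lookup_single_if split: if_splits)
      also have "\<dots> \<longleftrightarrow> 1 \<le> cH (Poly_Mapping.lookup (Poly_Mapping.single a (1::nat)))"
        using key[OF ka] r1 by simp
      also have "\<dots> \<longleftrightarrow> a \<in> insert v W" by (simp add: cH_single)
      finally show ?thesis .
    qed
    then have "A = insert v W" using AX vG by blast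
    then show ?thesis by blast
  qed
qed

end



context hyp
begin

lemma assc_back_G:
  assumes AVG: "A \<subseteq> VG" and AC: "AssC VG (CP VG EG s) A"
  shows "AssC (VG \<union> W) (CP (VG \<union> W) (EG \<union> {insert v W}) s) A"
proof -
  let ?MH = "CP (VG \<union> W) (EG \<union> {insert v W}) s"
  let ?Q = "\<lambda>\<mu>. covpow VG EG s (Poly_Mapping.lookup \<mu>)"
  have agreeQ: "?Q \<mu>' \<longleftrightarrow> ?Q \<mu>''" if "\<And>i. i \<in> VG \<Longrightarrow> Poly_Mapping.lookup \<mu>' i = Poly_Mapping.lookup \<mu>'' i" for \<mu>' \<mu>''
    using covG_eq[of "Poly_Mapping.lookup \<mu>'" "Poly_Mapping.lookup \<mu>''" s] that by blast
  from AC obtain \<mu> where k\<mu>: "Poly_Mapping.keys \<mu> \<subseteq> VG" and nM: "\<not> CP VG EG s \<mu>"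
    and eq: "\<And>\<nu>. Poly_Mapping.keys \<nu> \<subseteq> VG \<Longrightarrow> CP VG EG s (\<mu> + \<nu>) \<longleftrightarrow> (\<exists>a\<in>A. 0 < Poly_Mapping.lookup \<nu> a)"
    unfolding AssC_def by blast
  obtain w1 where w1: "w1 \<in> W" using Wne by blast
  define \<mu>' where "\<mu>' = \<mu> + Poly_Mapping.single w1 s"
  show ?thesis
    unfolding AssC_def
  proof (intro exI[of _ \<mu>'] conjI allI impI)
    show k': "Poly_Mapping.keys \<mu>' \<subseteq> VG \<union> W" unfolding \<mu>'_def using k\<mu> w1 by (auto simp: keys_add_nat)
    have q: "?Q \<mu>' \<longleftrightarrow> ?Q \<mu>"
      by (rule agreeQ) (use w1 WnVG in \<open>auto simp: \<mu>'_def lookup_add lookup_single_if\<close>)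
    show "\<not> ?MH \<mu>'" unfolding CPH using q nM k\<mu> unfolding CPG by blast
    fix \<nu> :: "'v \<Rightarrow>\<^sub>0 nat" assume k\<nu>: "Poly_Mapping.keys \<nu> \<subseteq> VG \<union> W"
    have c: "s \<le> cH (Poly_Mapping.lookup (\<mu>' + \<nu>))"
      unfolding \<mu>'_def cH_add cH_single using w1 vW by auto
    have "?MH (\<mu>' + \<nu>) \<longleftrightarrow> ?Q (\<mu>' + \<nu>)"
      unfolding CPH using k' k\<nu> c by (auto simp: keys_add_nat)
    also have "\<dots> \<longleftrightarrow> ?Q (\<mu> + rv \<nu>)"
      by (rule agreeQ) (use w1 WnVG in \<open>auto simp: \<mu>'_def lookup_add lookup_rv lookup_single_if\<close>)
    also have "\<dots> \<longleftrightarrow> CP VG EG s (\<mu> + rv \<nu>)"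
      unfolding CPG using keys_rv[of \<nu>] k\<mu> by (auto simp: keys_add_nat)
    also have "\<dots> \<longleftrightarrow> (\<exists>a\<in>A. 0 < Poly_Mapping.lookup (rv \<nu>) a)" by (rule eq[OF keys_rv])
    also have "\<dots> \<longleftrightarrow> (\<exists>a\<in>A. 0 < Poly_Mapping.lookup \<nu> a)"
      using AVG by (auto simp: lookup_rv)
    finally show "?MH (\<mu>' + \<nu>) \<longleftrightarrow> (\<exists>a\<in>A. 0 < Poly_Mapping.lookup \<nu> a)" .
  qed
qed

lemma assc_back_new:
  assumes s1: "1 \<le> s"
  shows "AssC (VG \<union> W) (CP (VG \<union> W) (EG \<union> {insert v W}) s) (insert v W)"
proof -
  let ?MH = "CP (VG \<union> W) (EG \<union> {insert v W}) s"
  define \<mu>0 where "\<mu>0 = (\<Sum>i\<in>VG - {v}. Poly_Mapping.single i s) + Poly_Mapping.single v (s - 1)"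
  have l0: "Poly_Mapping.lookup \<mu>0 i = (if i \<in> VG - {v} then s else 0) + (if i = v then s - 1 else 0)" for i
  proof -
    have "Poly_Mapping.lookup (\<Sum>i\<in>VG - {v}. Poly_Mapping.single i s) i = (\<Sum>j\<in>VG - {v}. if i = j then s else 0)"
      by (simp add: lookup_sum lookup_single_if eq_commute)
    also have "\<dots> = (if i \<in> VG - {v} then s else 0)" using finVG by (simp add: sum.delta)
    finally show ?thesis unfolding \<mu>0_def lookup_add by (simp add: lookup_single_if)
  qed
  have k0: "Poly_Mapping.keys \<mu>0 \<subseteq> VG \<union> W"
  proof
    fix i assume "i \<in> Poly_Mapping.keys \<mu>0"
    then have "Poly_Mapping.lookup \<mu>0 i \<noteq> 0" by (simp add: in_keys_iff)
    then show "i \<in> VG \<union> W" unfolding l0 using vG by (auto split: if_splits)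
  qed
  have vc: "vertex_cover VG EG (VG - {v})"
    unfolding vertex_cover_def
  proof (intro conjI ballI)
    show "VG - {v} \<subseteq> VG" by blast
    fix e assume e: "e \<in> EG"
    then obtain x where "x \<in> e" "x \<noteq> v" using noedge by blast
    then have "x \<in> (VG - {v}) \<inter> e" using edgeG[OF e] by blast
    then show "(VG - {v}) \<inter> e \<noteq> {}" by blast
  qed
  have Q0: "covpow VG EG s (Poly_Mapping.lookup \<mu>0)"
    unfolding covpow_def
  proof (intro exI[of _ "\<lambda>_. VG - {v}"] conjI allI impI)
    show "\<And>k. k < s \<Longrightarrow> vertex_cover VG EG (VG - {v})" using vc by blast
    fix i
    have "cnt (\<lambda>_. VG - {v}) s i = (if i \<in> VG - {v} then s else 0)"
      unfolding cnt_def by simp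
    then show "cnt (\<lambda>_. VG - {v}) s i \<le> Poly_Mapping.lookup \<mu>0 i" unfolding l0 by simp
  qed
  have c0: "cH (Poly_Mapping.lookup \<mu>0) = s - 1"
  proof -
    have "sum (Poly_Mapping.lookup \<mu>0) W = 0"
      by (rule sum.neutral) (use WnVG vW in \<open>auto simp: l0\<close>)
    then show ?thesis unfolding cH_def l0 using vG by simp
  qed
  show ?thesis
    unfolding AssC_def
  proof (intro exI[of _ \<mu>0] conjI allI impI)
    show "Poly_Mapping.keys \<mu>0 \<subseteq> VG \<union> W" by (rule k0)
    show "\<not> ?MH \<mu>0" unfolding CPH c0 using s1 by auto
    fix \<nu> :: "'v \<Rightarrow>\<^sub>0 nat" assume k\<nu>: "Poly_Mapping.keys \<nu> \<subseteq> VG \<union> W"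
    have "?MH (\<mu>0 + \<nu>) \<longleftrightarrow> s \<le> cH (Poly_Mapping.lookup (\<mu>0 + \<nu>))"
      unfolding CPH using k0 k\<nu> covG_add_mono[OF Q0] by (auto simp: keys_add_nat)
    also have "\<dots> \<longleftrightarrow> 1 \<le> cH (Poly_Mapping.lookup \<nu>)" unfolding cH_add c0 using s1 by auto
    also have "\<dots> \<longleftrightarrow> (0 < Poly_Mapping.lookup \<nu> v \<or> 0 < sum (Poly_Mapping.lookup \<nu>) W)"
      unfolding cH_def by auto
    also have "\<dots> \<longleftrightarrow> (\<exists>a\<in>insert v W. 0 < Poly_Mapping.lookup \<nu> a)"
      using sum_pos_iff[of \<nu>] by auto
    finally show "?MH (\<mu>0 + \<nu>) \<longleftrightarrow> (\<exists>a\<in>insert v W. 0 < Poly_Mapping.lookup \<nu> a)" .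
  qed
qed

lemma assc_set:
  assumes s1: "1 \<le> s"
  shows "{A. A \<subseteq> VG \<union> W \<and> AssC (VG \<union> W) (CP (VG \<union> W) (EG \<union> {insert v W}) s) A}
       = {A. A \<subseteq> VG \<and> AssC VG (CP VG EG s) A} \<union> {insert v W}"
proof (rule set_eqI)
  fix A
  show "A \<in> {A. A \<subseteq> VG \<union> W \<and> AssC (VG \<union> W) (CP (VG \<union> W) (EG \<union> {insert v W}) s) A}
       \<longleftrightarrow> A \<in> {A. A \<subseteq> VG \<and> AssC VG (CP VG EG s) A} \<union> {insert v W}"
  proof
    assume "A \<in> {A. A \<subseteq> VG \<union> W \<and> AssC (VG \<union> W) (CP (VG \<union> W) (EG \<union> {insert v W}) s) A}"
    then have "A \<subseteq> VG \<union> W" "AssC (VG \<union> W) (CP (VG \<union> W) (EG \<union> {insert v W}) s) A" by auto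
    from assc_fwd[OF this] show "A \<in> {A. A \<subseteq> VG \<and> AssC VG (CP VG EG s) A} \<union> {insert v W}" by blast
  next
    assume "A \<in> {A. A \<subseteq> VG \<and> AssC VG (CP VG EG s) A} \<union> {insert v W}"
    then consider "A \<subseteq> VG" "AssC VG (CP VG EG s) A" | "A = insert v W" by blast
    then show "A \<in> {A. A \<subseteq> VG \<union> W \<and> AssC (VG \<union> W) (CP (VG \<union> W) (EG \<union> {insert v W}) s) A}"
    proof cases
      case 1
      then show ?thesis using assc_back_G[OF 1] by blast
    next
      case 2
      then show ?thesis using assc_back_new[OF s1] vG by blast
    qed
  qed
qed

end



lemma gen_var:
  assumes AX: "A \<subseteq> X"
  shows "ideal_gen (polys_in X) (var ` A) = (MS X (hasA X A) :: ('v,'k::field) mpoly set)"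
proof -
  let ?B = "(\<lambda>a. Poly_Mapping.single a (1::nat)) ` A"
  have e: "(var ` A :: ('v,'k) mpoly set) = (\<lambda>\<beta>. Poly_Mapping.single \<beta> 1) ` ?B"
    unfolding var_def image_image ..
  have BX: "Poly_Mapping.keys \<beta> \<subseteq> X" if "\<beta> \<in> ?B" for \<beta> using that AX by auto
  have "ideal_gen (polys_in X) (var ` A) = (MS X (\<lambda>\<mu>. Poly_Mapping.keys \<mu> \<subseteq> X \<and> (\<exists>\<beta>\<in>?B. dvdm \<beta> \<mu>)) :: ('v,'k) mpoly set)"
    unfolding e by (rule G1[OF BX])
  also have "\<dots> = MS X (hasA X A)"
  proof (rule MS_cong)
    fix \<mu> :: "'v \<Rightarrow>\<^sub>0 nat" assume "Poly_Mapping.keys \<mu> \<subseteq> X"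
    have d: "dvdm (Poly_Mapping.single a 1) \<mu> \<longleftrightarrow> 0 < Poly_Mapping.lookup \<mu> a" for a
      unfolding dvdm_def by (auto simp: lookup_single when_def Suc_le_eq)
    show "(Poly_Mapping.keys \<mu> \<subseteq> X \<and> (\<exists>\<beta>\<in>?B. dvdm \<beta> \<mu>)) \<longleftrightarrow> hasA X A \<mu>"
      unfolding hasA_def using d by blast
  qed
  finally show ?thesis .
qed

lemma gen_ext:
  assumes AY: "A \<subseteq> Y" and YX: "Y \<subseteq> X"
  shows "ideal_gen (polys_in X) (MS Y (hasA Y A)) = (MS X (hasA X A) :: ('v,'k::field) mpoly set)"
proof
  have sub: "(MS Y (hasA Y A) :: ('v,'k) mpoly set) \<subseteq> MS X (hasA X A)"
  proof
    fix f :: "('v,'k) mpoly" assume "f \<in> MS Y (hasA Y A)"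
    then show "f \<in> MS X (hasA X A)" using YX by (auto simp: MS_iff hasA_def polys_in_iff)
  qed
  show "ideal_gen (polys_in X) (MS Y (hasA Y A)) \<subseteq> (MS X (hasA X A) :: ('v,'k) mpoly set)"
    by (rule ideal_gen_least[OF MS_ideal[OF hasA_upclosed] sub])
  have "(var ` A :: ('v,'k) mpoly set) \<subseteq> MS Y (hasA Y A)"
  proof
    fix p :: "('v,'k) mpoly" assume "p \<in> var ` A"
    then obtain a where a: "a \<in> A" "p = var a" by blast
    then show "p \<in> MS Y (hasA Y A)" using AY
      by (auto simp: MS_iff hasA_def var_def polys_in_iff intro!: bexI[of _ a])
  qed
  then have "ideal_gen (polys_in X) (var ` A) \<subseteq> (ideal_gen (polys_in X) (MS Y (hasA Y A)) :: ('v,'k) mpoly set)"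
    by (rule ideal_gen_mono)
  then show "(MS X (hasA X A) :: ('v,'k) mpoly set) \<subseteq> ideal_gen (polys_in X) (MS Y (hasA Y A))"
    using gen_var[of A X] AY YX by auto
qed

theorem theorem2p16:
  fixes VG W :: "'v set" and EG :: "'v set set" and v :: 'v and s :: nat
  assumes "simple_hypergraph VG EG"
    and "finite W" and "W \<noteq> {}" and "W \<inter> VG = {}"
    and "v \<in> VG"
    and "simple_hypergraph (VG \<union> W) (EG \<union> {insert v W})"
    and "s \<ge> 1"
  shows "Ass (polys_in (VG \<union> W)) (ideal_pow (polys_in (VG \<union> W))
            (cover_ideal (VG \<union> W) (EG \<union> {insert v W}) :: ('v, 'k::field) mpoly set) s)
       = (\<lambda>P. ideal_gen (polys_in (VG \<union> W)) P) `
            Ass (polys_in VG) (ideal_pow (polys_in VG) (cover_ideal VG EG) s)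
         \<union> {ideal_gen (polys_in (VG \<union> W)) (var ` (insert v W))}"
proof -
  interpret H: hyp VG W EG v
    by (unfold_locales) (use assms in auto)
  have finG: "finite VG" by (rule H.finVG)
  have finX: "finite (VG \<union> W)" using finG assms(2) by simp
  let ?X = "VG \<union> W"
  let ?E = "EG \<union> {insert v W}"
  let ?AG = "{A. A \<subseteq> VG \<and> AssC VG (CP VG EG s) A}"
  have L: "Ass (polys_in ?X) (ideal_pow (polys_in ?X) (cover_ideal ?X ?E :: ('v,'k) mpoly set) s)
      = (\<lambda>A. MS ?X (hasA ?X A)) ` {A. A \<subseteq> ?X \<and> AssC ?X (CP ?X ?E s) A}"
    unfolding pow_cover[OF finX] by (rule bridge[OF finX CP_upclosed])
  have R: "Ass (polys_in VG) (ideal_pow (polys_in VG) (cover_ideal VG EG :: ('v,'k) mpoly set) s)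
      = (\<lambda>A. MS VG (hasA VG A)) ` ?AG"
    unfolding pow_cover[OF finG] by (rule bridge[OF finG CP_upclosed])
  have "Ass (polys_in ?X) (ideal_pow (polys_in ?X) (cover_ideal ?X ?E :: ('v,'k) mpoly set) s)
      = (\<lambda>A. MS ?X (hasA ?X A)) ` (?AG \<union> {insert v W})"
    unfolding L H.assc_set[OF assms(7)] ..
  also have "\<dots> = (\<lambda>A. (MS ?X (hasA ?X A) :: ('v,'k) mpoly set)) ` ?AG \<union> {MS ?X (hasA ?X (insert v W))}"
    by simp
  also have "(\<lambda>A. (MS ?X (hasA ?X A) :: ('v,'k) mpoly set)) ` ?AG
      = (\<lambda>P. ideal_gen (polys_in ?X) P) ` ((\<lambda>A. MS VG (hasA VG A)) ` ?AG)"
    unfolding image_image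
  proof (rule image_cong[OF refl])
    fix A assume "A \<in> ?AG"
    then have "A \<subseteq> VG" by blast
    then show "(MS ?X (hasA ?X A) :: ('v,'k) mpoly set) = ideal_gen (polys_in ?X) (MS VG (hasA VG A))"
      by (intro gen_ext[symmetric]) auto
  qed
  also have "(MS ?X (hasA ?X (insert v W)) :: ('v,'k) mpoly set) = ideal_gen (polys_in ?X) (var ` insert v W)"
    by (rule gen_var[symmetric]) (use assms(5) in blast)
  finally show ?thesis unfolding R .
qed


end
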